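(* Let $\mathcal{H}$ be a complex Hilbert space, let $A\in\mathcal{B}(\mathcal{H})$ be a nonzero positive operator, and let $P,Q,R,S\in\mathcal{B}_A(\mathcal{H})$. Then $$r_A(PQ+RS)\leq\frac12\big[\omega_A(QP)+\omega_A(SR)\big]+\frac12\sqrt{\big[\omega_A(QP)-\omega_A(SR)\big]^2+\big[\omega_A(QR+SP)+\omega_A(QR-SP)\big]^2}.$$
   Context: For a positive operator $A$ on $\mathcal{H}$, $\langle x,y\rangle_A:=\langle Ax,y\rangle$ and $\|x\|_A:=\sqrt{\langle x,x\rangle_A}$. $\mathcal{B}_A(\mathcal{H})$ is the set of $T\in\mathcal{B}(\mathcal{H})$ with $\mathcal{R}(T^*A)\subseteq\mathcal{R}(A)$. For $T$ bounded with respect to $\|\cdot\|_A$: $\|T\|_A:=\sup\{\|Tx\|_A:\|x\|_A=1\}$, $\omega_A(T):=\sup\{|\langle Tx,x\rangle_A|:\|x\|_A=1\}$, and the $A$-spectral radius $r_A(T):=\lim_{n\to\infty}\|T^n\|_A^{1/n}=\inf_{n\ge1}\|T^n\|_A^{1/n}$. *)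

theory Defs
  imports "HOL-Analysis.Analysis"
begin

text \<open>A complex Hilbert space is modelled on a type 'h with its additive group
structure, an explicit complex scalar multiplication sc and an inner product ip
(linear in the first argument, conjugate-linear in the second), complete for the
induced norm.\<close>

definition cinner_space :: "(complex \<Rightarrow> 'h::ab_group_add \<Rightarrow> 'h) \<Rightarrow> ('h \<Rightarrow> 'h \<Rightarrow> complex) \<Rightarrow> bool" where
  "cinner_space sc ip \<longleftrightarrow>
     (\<forall>x. sc 1 x = x) \<and>
     (\<forall>a b x. sc a (sc b x) = sc (a * b) x) \<and>
     (\<forall>a x y. sc a (x + y) = sc a x + sc a y) \<and>
     (\<forall>a b x. sc (a + b) x = sc a x + sc b x) \<and>
     (\<forall>x y z. ip (x + y) z = ip x z + ip y z) \<and>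
     (\<forall>a x y. ip (sc a x) y = a * ip x y) \<and>
     (\<forall>x y. ip y x = cnj (ip x y)) \<and>
     (\<forall>x. Im (ip x x) = 0 \<and> Re (ip x x) \<ge> 0) \<and>
     (\<forall>x. ip x x = 0 \<longrightarrow> x = 0)"

definition hnorm :: "('h \<Rightarrow> 'h \<Rightarrow> complex) \<Rightarrow> 'h \<Rightarrow> real" where
  "hnorm ip x = sqrt (Re (ip x x))"

definition complex_hilbert :: "(complex \<Rightarrow> 'h::ab_group_add \<Rightarrow> 'h) \<Rightarrow> ('h \<Rightarrow> 'h \<Rightarrow> complex) \<Rightarrow> bool" where
  "complex_hilbert sc ip \<longleftrightarrow> cinner_space sc ip \<and>
     (\<forall>X::nat \<Rightarrow> 'h. (\<forall>e>0. \<exists>N. \<forall>m\<ge>N. \<forall>n\<ge>N. hnorm ip (X m - X n) < e)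
        \<longrightarrow> (\<exists>L. (\<lambda>n. hnorm ip (X n - L)) \<longlonglongrightarrow> 0))"

definition bounded_op :: "(complex \<Rightarrow> 'h::ab_group_add \<Rightarrow> 'h) \<Rightarrow> ('h \<Rightarrow> 'h \<Rightarrow> complex) \<Rightarrow> ('h \<Rightarrow> 'h) \<Rightarrow> bool" where
  "bounded_op sc ip T \<longleftrightarrow>
     (\<forall>x y. T (x + y) = T x + T y) \<and> (\<forall>a x. T (sc a x) = sc a (T x)) \<and>
     (\<exists>C. \<forall>x. hnorm ip (T x) \<le> C * hnorm ip x)"

definition is_adjoint :: "('h \<Rightarrow> 'h \<Rightarrow> complex) \<Rightarrow> ('h \<Rightarrow> 'h) \<Rightarrow> ('h \<Rightarrow> 'h) \<Rightarrow> bool" where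
  "is_adjoint ip T T' \<longleftrightarrow> (\<forall>x y. ip (T x) y = ip x (T' y))"

definition positive_op :: "(complex \<Rightarrow> 'h::ab_group_add \<Rightarrow> 'h) \<Rightarrow> ('h \<Rightarrow> 'h \<Rightarrow> complex) \<Rightarrow> ('h \<Rightarrow> 'h) \<Rightarrow> bool" where
  "positive_op sc ip A \<longleftrightarrow> bounded_op sc ip A \<and>
     (\<forall>x. Im (ip (A x) x) = 0 \<and> Re (ip (A x) x) \<ge> 0)"

definition BA :: "(complex \<Rightarrow> 'h::ab_group_add \<Rightarrow> 'h) \<Rightarrow> ('h \<Rightarrow> 'h \<Rightarrow> complex) \<Rightarrow> ('h \<Rightarrow> 'h) \<Rightarrow> ('h \<Rightarrow> 'h) set" where
  "BA sc ip A = {T. bounded_op sc ip T \<and>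
     (\<exists>T'. is_adjoint ip T T' \<and> range (\<lambda>x. T' (A x)) \<subseteq> range A)}"

definition Anorm :: "('h \<Rightarrow> 'h \<Rightarrow> complex) \<Rightarrow> ('h \<Rightarrow> 'h) \<Rightarrow> 'h \<Rightarrow> real" where
  "Anorm ip A x = sqrt (Re (ip (A x) x))"

definition Aopnorm :: "('h \<Rightarrow> 'h \<Rightarrow> complex) \<Rightarrow> ('h \<Rightarrow> 'h) \<Rightarrow> ('h \<Rightarrow> 'h) \<Rightarrow> real" where
  "Aopnorm ip A T = Sup {Anorm ip A (T x) | x. Anorm ip A x = 1}"

definition Anumrad :: "('h \<Rightarrow> 'h \<Rightarrow> complex) \<Rightarrow> ('h \<Rightarrow> 'h) \<Rightarrow> ('h \<Rightarrow> 'h) \<Rightarrow> real" where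
  "Anumrad ip A T = Sup {cmod (ip (A (T x)) x) | x. Anorm ip A x = 1}"

definition Aspecrad :: "('h \<Rightarrow> 'h \<Rightarrow> complex) \<Rightarrow> ('h \<Rightarrow> 'h) \<Rightarrow> ('h \<Rightarrow> 'h) \<Rightarrow> real" where
  "Aspecrad ip A T = Inf {root n (Aopnorm ip A (T ^^ n)) | n. n \<ge> 1}"

end

theory Submission
  imports Defs
begin

locale sip =
  fixes sc :: "complex \<Rightarrow> 'v::ab_group_add \<Rightarrow> 'v" and h :: "'v \<Rightarrow> 'v \<Rightarrow> complex"
  assumes sc1: "\<And>x. sc 1 x = x"
    and sc_sc: "\<And>a b x. sc a (sc b x) = sc (a * b) x"
    and sc_add: "\<And>a x y. sc a (x + y) = sc a x + sc a y"
    and add_sc: "\<And>a b x. sc (a + b) x = sc a x + sc b x"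
    and h_add: "\<And>x y z. h (x + y) z = h x z + h y z"
    and h_sc: "\<And>a x y. h (sc a x) y = a * h x y"
    and h_sym: "\<And>x y. h y x = cnj (h x y)"
    and h_pos: "\<And>x. Im (h x x) = 0 \<and> Re (h x x) \<ge> 0"
begin

definition nn :: "'v \<Rightarrow> real" where "nn x = sqrt (Re (h x x))"

lemma sc0[simp]: "sc 0 x = 0"
  using add_sc[of 0 0 x] by simp
lemma sc_0[simp]: "sc a 0 = 0"
  using sc_add[of a 0 0] by simp
lemma sc_minus: "sc a (- x) = - sc a x"
  using sc_add[of a x "-x"] by (simp add: eq_neg_iff_add_eq_0 add.commute)
lemma minus_sc: "sc (- a) x = - sc a x"
  using add_sc[of a "-a" x] by (simp add: eq_neg_iff_add_eq_0 add.commute)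
lemma sc_diff: "sc a (x - y) = sc a x - sc a y"
  using sc_add[of a x "-y"] sc_minus by simp
lemma diff_sc: "sc (a - b) x = sc a x - sc b x"
  using add_sc[of a "-b" x] minus_sc by simp
lemma sc_sum: "sc a (sum f S) = (\<Sum>i\<in>S. sc a (f i))"
  by (induction S rule: infinite_finite_induct) (auto simp: sc_add)
lemma sum_sc: "sc (sum f S) x = (\<Sum>i\<in>S. sc (f i) x)"
  by (induction S rule: infinite_finite_induct) (auto simp: add_sc)

lemma h_0l[simp]: "h 0 y = 0" using h_add[of 0 0 y] by simp
lemma h_minus_l: "h (- x) y = - h x y" using h_add[of x "-x" y] by (simp add: eq_neg_iff_add_eq_0 add.commute)
lemma h_diff_l: "h (x - y) z = h x z - h y z" using h_add[of x "-y" z] h_minus_l by simp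
lemma h_add_r: "h z (x + y) = h z x + h z y" by (metis h_sym h_add complex_cnj_add)
lemma h_sc_r: "h x (sc a y) = cnj a * h x y" by (metis h_sym h_sc complex_cnj_mult complex_cnj_cnj)
lemma h_0r[simp]: "h y 0 = 0" by (metis h_0l h_sym complex_cnj_zero)
lemma h_minus_r: "h z (- x) = - h z x" by (metis h_sym h_minus_l complex_cnj_minus)
lemma h_diff_r: "h z (x - y) = h z x - h z y" by (metis h_sym h_diff_l complex_cnj_diff)
lemma h_sum_l: "h (sum f S) y = (\<Sum>i\<in>S. h (f i) y)"
  by (induction S rule: infinite_finite_induct) (auto simp: h_add)
lemma h_sum_r: "h y (sum f S) = (\<Sum>i\<in>S. h y (f i))"
  by (induction S rule: infinite_finite_induct) (auto simp: h_add_r)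

lemma hxx: "h x x = complex_of_real (nn x ^ 2)"
  using h_pos[of x] by (simp add: nn_def complex_eq_iff)
lemma nn_nonneg[simp]: "nn x \<ge> 0" using h_pos[of x] by (simp add: nn_def)
lemma nn_sq: "nn x ^ 2 = Re (h x x)" using h_pos[of x] by (simp add: nn_def)

lemma nn_sc: "nn (sc a x) = cmod a * nn x"
proof -
  have "h (sc a x) (sc a x) = (cmod a)^2 * h x x"
    using complex_norm_square[of a] by (simp add: h_sc h_sc_r mult.assoc[symmetric] mult.commute[of "cnj a" a])
  then have "Re (h (sc a x) (sc a x)) = (cmod a)^2 * Re (h x x)"
    by (simp flip: of_real_power)
  then show ?thesis by (simp add: nn_def real_sqrt_mult)
qed

lemma expand: "h (x - sc c y) (x - sc c y) = h x x - cnj c * h x y - c * h y x + c * cnj c * h y y"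
  by (simp add: h_diff_l h_diff_r h_sc h_sc_r algebra_simps)

lemma cs: "cmod (h x y) \<le> nn x * nn y"
proof -
  have key: "(cmod (h x y))^2 \<le> nn x ^ 2 * nn y ^ 2"
  proof (cases "nn y = 0")
    case True
    have hyy: "h y y = 0" using True hxx[of y] by simp
    have a: "2 * t * (cmod (h x y))^2 \<le> Re (h x x)" for t :: real
    proof -
      have "0 \<le> Re (h (x - sc (of_real t * h x y) y) (x - sc (of_real t * h x y) y))" using h_pos by simp
      also have "\<dots> = Re (h x x) - 2 * t * (cmod (h x y))^2"
        unfolding expand hyy h_sym[of y x]
        by (simp add: complex_norm_square power2_eq_square cmod_def)
      finally show ?thesis by simp
    qed
    have "cmod (h x y) = 0"
    proof (rule ccontr)
      assume "cmod (h x y) \<noteq> 0"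
      then have p: "(cmod (h x y))^2 > 0" by simp
      have "2 * ((Re (h x x) + 1) / (2 * (cmod (h x y))^2)) * (cmod (h x y))^2 \<le> Re (h x x)" using a by blast
      then show False using p by (simp add: field_simps)
    qed
    then show ?thesis by simp
  next
    case False
    let ?t = "h x y / of_real (nn y ^ 2)"
    have "0 \<le> Re (h (x - sc ?t y) (x - sc ?t y))" using h_pos by simp
    also have "h (x - sc ?t y) (x - sc ?t y) = h x x - of_real ((cmod (h x y))^2 / nn y ^ 2)"
      unfolding expand h_sym[of y x] hxx[of y]
      using False complex_norm_square[of "h x y"] by (simp add: field_simps power2_eq_square)
    finally have "(cmod (h x y))^2 / nn y ^ 2 \<le> nn x ^2" by (simp add: nn_sq)
    then show ?thesis using False by (simp add: field_simps)
  qed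
  then show ?thesis
    by (metis mult_nonneg_nonneg nn_nonneg norm_ge_zero power_mult_distrib power2_le_imp_le)
qed

end

lemma four_bound:
  fixes X a b c d :: complex
  assumes "4 * X = a + \<i> * b - c - \<i> * d"
  shows "4 * cmod X \<le> cmod a + cmod b + cmod c + cmod d"
proof -
  have "4 * cmod X = cmod (a + \<i> * b - c - \<i> * d)" using assms
    by (metis norm_mult norm_numeral)
  also have "\<dots> \<le> cmod a + cmod (\<i> * b) + cmod c + cmod (\<i> * d)"
    using norm_triangle_ineq4[of "a + \<i> * b - c" "\<i> * d"] norm_triangle_ineq4[of "a + \<i> * b" c]
      norm_triangle_ineq[of a "\<i> * b"] by linarith
  finally show ?thesis by (simp add: norm_mult)
qed

lemma aux_le: "x \<ge> 0 \<Longrightarrow> e > 0 \<Longrightarrow> x * e / (x + 1) \<le> (e::real)"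
  by (simp add: pos_divide_le_eq)

lemma scale_lemma:
  fixes X w a b :: real
  assumes w: "w \<ge> 0" and a: "a \<ge> 0" and b: "b \<ge> 0"
    and H: "\<And>t. t > 0 \<Longrightarrow> X \<le> w * (t^2 * a^2 + b^2 / t^2)"
  shows "X \<le> 2 * w * a * b"
proof (cases "a > 0 \<and> b > 0")
  case True
  define t where "t = sqrt (b / a)"
  have t: "t > 0" "t^2 = b / a" using True by (auto simp: t_def)
  have "X \<le> w * (t^2 * a^2 + b^2 / t^2)" using H t by blast
  also have "t^2 * a^2 + b^2 / t^2 = 2 * a * b"
  proof -
    have "b^2 / t^2 = b^2 / (b/a)" by (simp add: t(2))
    also have "\<dots> = a * b" using True by (simp add: field_simps power2_eq_square)
    finally show ?thesis using True t(2) by (simp add: field_simps power2_eq_square)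
  qed
  finally show ?thesis by simp
next
  case False
  have "X \<le> e" if e: "e > 0" for e
  proof (cases "a = 0")
    case True
    define t where "t = sqrt ((w * b^2 + 1) / e)"
    have t: "t > 0" "t^2 = (w * b^2 + 1) / e" using e w by (auto simp: t_def intro!: divide_pos_pos add_nonneg_pos mult_nonneg_nonneg)
    have "X \<le> w * (b^2 / t^2)" using H[OF t(1)] True by simp
    also have "\<dots> = w * (b^2 / ((w * b^2 + 1) / e))" by (simp add: t(2))
    also have "\<dots> = w * b^2 * e / (w * b^2 + 1)" by simp
    also have "\<dots> \<le> e" using e w by (intro aux_le) auto
    finally show ?thesis .
  next
    case False
    then have b0: "b = 0" using \<open>\<not> (a > 0 \<and> b > 0)\<close> a b by auto
    define t where "t = sqrt (e / (w * a^2 + 1))"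
    have t: "t > 0" "t^2 = e / (w * a^2 + 1)" using e w by (auto simp: t_def intro!: divide_pos_pos add_nonneg_pos mult_nonneg_nonneg)
    have "X \<le> w * (t^2 * a^2)" using H[OF t(1)] b0 by simp
    also have "\<dots> = w * a^2 * e / (w * a^2 + 1)" by (simp add: t(2))
    also have "\<dots> \<le> e" using e w by (intro aux_le) auto
    finally show ?thesis .
  qed
  then have "X \<le> 0" by (metis dense not_le)
  moreover have "0 \<le> 2 * w * a * b" using w a b by simp
  ultimately show ?thesis by linarith
qed

context sip begin

definition lin :: "('v \<Rightarrow> 'v) \<Rightarrow> bool" where
  "lin B \<longleftrightarrow> (\<forall>x y. B (x + y) = B x + B y) \<and> (\<forall>a x. B (sc a x) = sc a (B x))"

lemma lin_add: "lin B \<Longrightarrow> B (x + y) = B x + B y" by (simp add: lin_def)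
lemma lin_sc: "lin B \<Longrightarrow> B (sc a x) = sc a (B x)" by (simp add: lin_def)
lemma lin_0: "lin B \<Longrightarrow> B 0 = 0" using lin_add[of B 0 0] by simp
lemma lin_minus: "lin B \<Longrightarrow> B (- x) = - B x"
  using lin_add[of B x "-x"] lin_0[of B] by (simp add: eq_neg_iff_add_eq_0 add.commute)
lemma lin_diff: "lin B \<Longrightarrow> B (x - y) = B x - B y"
  using lin_add[of B x "-y"] lin_minus[of B y] by simp
lemma lin_sum: "lin B \<Longrightarrow> B (sum f S) = (\<Sum>i\<in>S. B (f i))"
  by (induction S rule: infinite_finite_induct) (auto simp: lin_add lin_0)
lemma lin_comp: "lin B \<Longrightarrow> lin C \<Longrightarrow> lin (B \<circ> C)" unfolding lin_def by simp
lemma lin_id: "lin id" by (simp add: lin_def)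
lemma lin_funpow: "lin B \<Longrightarrow> lin (B ^^ n)"
  by (induction n) (simp_all add: lin_id lin_comp del: comp_apply)


lemma nn_0[simp]: "nn 0 = 0" by (simp add: nn_def)
lemma nn_minus: "nn (- x) = nn x" unfolding nn_def h_minus_l h_minus_r by simp

lemma hxx_Re: "Re (h x x) = nn x ^ 2" by (simp add: nn_sq)

lemma nn_add_sq: "nn (x + y) ^ 2 = nn x ^ 2 + nn y ^ 2 + 2 * Re (h x y)"
proof -
  have "h (x + y) (x + y) = h x x + h y y + (h x y + cnj (h x y))"
    unfolding h_add h_add_r h_sym[of y x] by simp
  then have "Re (h (x + y) (x + y)) = Re (h x x) + Re (h y y) + 2 * Re (h x y)" by simp
  then show ?thesis unfolding nn_sq .
qed

lemma nn_triangle: "nn (x + y) \<le> nn x + nn y"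
proof -
  have "Re (h x y) \<le> nn x * nn y" using cs[of x y] complex_Re_le_cmod[of "h x y"] by linarith
  then have "nn (x + y) ^ 2 \<le> (nn x + nn y) ^ 2"
    unfolding nn_add_sq power2_sum by linarith
  then show ?thesis using power2_le_imp_le[of "nn (x+y)" "nn x + nn y"] by simp
qed

lemma nn_diff_sym: "nn (x - y) = nn (y - x)" using nn_minus[of "x - y"] by simp

lemma nn_diff_triangle: "nn (x - z) \<le> nn (x - y) + nn (y - z)"
  using nn_triangle[of "x - y" "y - z"] by simp

lemma expand_op: "h (B (u + sc c v)) (u + sc c v) = h (B u) u + cnj c * h (B u) v + c * h (B v) u + c * cnj c * h (B v) v"
  if "lin B" for B u v c
  using that by (simp add: lin_add lin_sc h_add h_add_r h_sc h_sc_r algebra_simps)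

lemma polar_bound:
  assumes B: "lin B" and w: "w \<ge> 0" and hb: "\<And>y. cmod (h (B y) y) \<le> w * nn y ^ 2"
  shows "cmod (h (B u) v) \<le> w * (nn u ^ 2 + nn v ^ 2)"
proof -
  have "4 * h (B u) v = h (B (u + sc 1 v)) (u + sc 1 v) + \<i> * h (B (u + sc \<i> v)) (u + sc \<i> v)
     - h (B (u + sc (-1) v)) (u + sc (-1) v) - \<i> * h (B (u + sc (-\<i>) v)) (u + sc (-\<i>) v)"
    unfolding expand_op[OF B] by (simp add: algebra_simps)
  then have "4 * cmod (h (B u) v) \<le> cmod (h (B (u + sc 1 v)) (u + sc 1 v)) + cmod (h (B (u + sc \<i> v)) (u + sc \<i> v))
     + cmod (h (B (u + sc (-1) v)) (u + sc (-1) v)) + cmod (h (B (u + sc (-\<i>) v)) (u + sc (-\<i>) v))"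
    by (rule four_bound)
  also have "\<dots> \<le> w * nn (u + sc 1 v) ^ 2 + w * nn (u + sc \<i> v) ^ 2 + w * nn (u + sc (-1) v) ^ 2 + w * nn (u + sc (-\<i>) v) ^ 2"
    using hb by (intro add_mono) auto
  also have "\<dots> = 4 * w * (nn u ^ 2 + nn v ^ 2)"
    unfolding nn_add_sq nn_sc h_sc_r by (simp add: algebra_simps)
  finally show ?thesis by simp
qed

lemma op_bound2:
  assumes B: "lin B" and w: "w \<ge> 0" and hb: "\<And>y. cmod (h (B y) y) \<le> w * nn y ^ 2"
  shows "nn (B u) \<le> 2 * w * nn u"
proof -
  have "nn (B u) ^ 2 \<le> 2 * w * nn u * nn (B u)"
  proof (rule scale_lemma[OF w nn_nonneg nn_nonneg])
    fix t :: real assume t: "t > 0"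
    have "h (B (sc (of_real t) u)) (sc (of_real (1/t)) (B u)) = h (B u) (B u)"
      using t by (simp add: lin_sc[OF B] h_sc h_sc_r)
    then have "nn (B u) ^ 2 = cmod (h (B (sc (of_real t) u)) (sc (of_real (1/t)) (B u)))"
      by (simp add: hxx norm_power)
    also have "\<dots> \<le> w * (nn (sc (of_real t) u) ^ 2 + nn (sc (of_real (1/t)) (B u)) ^ 2)"
      by (rule polar_bound[OF B w hb])
    also have "\<dots> = w * (t^2 * nn u ^ 2 + nn (B u) ^ 2 / t^2)"
      using t by (simp add: nn_sc power_mult_distrib power_divide norm_divide)
    finally show "nn (B u) ^ 2 \<le> w * (t^2 * nn u ^ 2 + nn (B u) ^ 2 / t^2)" .
  qed
  note key = this
  show ?thesis
  proof (cases "nn (B u) = 0")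
    case True then show ?thesis using w by simp
  next
    case False
    then have "nn (B u) * nn (B u) \<le> (2 * w * nn u) * nn (B u)" using key by (simp add: power2_eq_square)
    then show ?thesis using False nn_nonneg[of "B u"] by (simp add: mult_le_cancel_right)
  qed
qed

end

lemma root_pow_n: "n > 0 \<Longrightarrow> cis (2 * pi * real k / real n) ^ n = 1"
proof -
  assume n: "n > 0"
  have "cis (2 * pi * real k / real n) ^ n = cis (real n * (2 * pi * real k / real n))" by (rule Complex.DeMoivre)
  also have "real n * (2 * pi * real k / real n) = 2 * pi * real k" using n by simp
  also have "cis (2 * pi * real k) = 1" by (rule cis_multiple_2pi) simp
  finally show ?thesis .
qed

lemma roots_sum:
  assumes "0 < i" "i < n"
  shows "(\<Sum>k<n. cis (2 * pi * real k / real n) ^ i) = 0"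
proof -
  define r where "r = cis (2 * pi * real i / real n)"
  have eq: "cis (2 * pi * real k / real n) ^ i = r ^ k" for k
    unfolding r_def Complex.DeMoivre by (simp add: algebra_simps)
  have r1: "r \<noteq> 1"
  proof
    assume "r = 1"
    then have "cos (2 * pi * real i / real n) = 1" unfolding r_def by (metis cis.sel(1) one_complex.sel(1))
    then obtain m :: int where m: "2 * pi * real i / real n = real_of_int m * 2 * pi" using cos_one_2pi_int by blast
    have "real i / real n = (2 * pi * real i / real n) / (2 * pi)" by simp
    also have "\<dots> = real_of_int m" unfolding m by simp
    finally have "real i / real n = real_of_int m" .
    moreover have "0 < real i / real n" "real i / real n < 1" using assms by auto
    ultimately show False by (metis of_int_0_less_iff of_int_less_1_iff not_le zero_less_iff_neq_zero int_one_le_iff_zero_less)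
  qed
  have "r ^ n = 1" unfolding r_def using root_pow_n[of n i] assms by simp
  then show ?thesis unfolding eq using geometric_sum[OF r1, of n] by simp
qed

context sip begin

lemma cross_bound0:
  assumes E: "lin E" and w: "w \<ge> 0" and hb: "\<And>y. cmod (h (E y) y) \<le> w * nn y ^ 2"
  shows "cmod (h (E v) u + h (E u) v) \<le> w * (nn u ^ 2 + nn v ^ 2)"
proof -
  have "2 * (h (E v) u + h (E u) v) = h (E (u + sc 1 v)) (u + sc 1 v) - h (E (u + sc (-1) v)) (u + sc (-1) v)"
    unfolding expand_op[OF E] by (simp add: algebra_simps)
  then have "2 * cmod (h (E v) u + h (E u) v) \<le> cmod (h (E (u + sc 1 v)) (u + sc 1 v)) + cmod (h (E (u + sc (-1) v)) (u + sc (-1) v))"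
    by (metis norm_mult norm_numeral norm_triangle_ineq4)
  also have "\<dots> \<le> w * nn (u + sc 1 v) ^ 2 + w * nn (u + sc (-1) v) ^ 2"
    using hb by (intro add_mono) auto
  also have "\<dots> = 2 * w * (nn u ^ 2 + nn v ^ 2)"
    unfolding nn_add_sq nn_sc h_sc_r by (simp add: algebra_simps)
  finally show ?thesis by simp
qed

lemma cross_bound:
  assumes E: "lin E" and w: "w \<ge> 0" and hb: "\<And>y. cmod (h (E y) y) \<le> w * nn y ^ 2"
  shows "cmod (h (E v) u + h (E u) v) \<le> 2 * w * nn u * nn v"
proof (rule scale_lemma[OF w nn_nonneg nn_nonneg])
  fix t :: real assume t: "t > 0"
  have "h (E (sc (of_real (1/t)) v)) (sc (of_real t) u) + h (E (sc (of_real t) u)) (sc (of_real (1/t)) v)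
      = h (E v) u + h (E u) v"
    using t by (simp add: lin_sc[OF E] h_sc h_sc_r)
  then have "cmod (h (E v) u + h (E u) v) = cmod (h (E (sc (of_real (1/t)) v)) (sc (of_real t) u) + h (E (sc (of_real t) u)) (sc (of_real (1/t)) v))"
    by simp
  also have "\<dots> \<le> w * (nn (sc (of_real t) u) ^ 2 + nn (sc (of_real (1/t)) v) ^ 2)"
    by (rule cross_bound0[OF E w hb])
  also have "\<dots> = w * (t^2 * nn u ^ 2 + nn v ^ 2 / t^2)"
    using t by (simp add: nn_sc power_mult_distrib power_divide norm_divide)
  finally show "cmod (h (E v) u + h (E u) v) \<le> w * (t^2 * nn u ^ 2 + nn v ^ 2 / t^2)" .
qed

lemma cross_bound_minus:
  assumes E: "lin E" and w: "w \<ge> 0" and hb: "\<And>y. cmod (h (E y) y) \<le> w * nn y ^ 2"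
  shows "cmod (h (E v) u - h (E u) v) \<le> 2 * w * nn u * nn v"
proof -
  have "h (E (sc \<i> v)) u + h (E u) (sc \<i> v) = \<i> * (h (E v) u - h (E u) v)"
    by (simp add: lin_sc[OF E] h_sc h_sc_r algebra_simps)
  then have "cmod (h (E v) u - h (E u) v) = cmod (h (E (sc \<i> v)) u + h (E u) (sc \<i> v))"
    by (simp add: norm_mult)
  also have "\<dots> \<le> 2 * w * nn u * nn (sc \<i> v)" by (rule cross_bound[OF E w hb])
  finally show ?thesis by (simp add: nn_sc)
qed

lemma pearcy:
  assumes M: "lin M" and mu: "\<mu> > 0" and hb: "\<And>y. cmod (h (M y) y) \<le> \<mu> * nn y ^ 2"
    and n: "n > 0" and z: "cmod z * \<mu> \<le> 1"
  shows "Re (z ^ n * h ((M ^^ n) y) y) \<le> nn y ^ 2"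
proof -
  define \<omega> where "\<omega> k = cis (2 * pi * real k / real n)" for k
  define f where "f k i = sc ((\<omega> k * z) ^ i) ((M ^^ i) y)" for k i
  define Y where "Y k = (\<Sum>i<n. f k i)" for k
  define w0 where "w0 = y - sc (z ^ n) ((M ^^ n) y)"
  have a: "Y k - sc (\<omega> k * z) (M (Y k)) = w0" for k
  proof -
    have "sc (\<omega> k * z) (M (Y k)) = (\<Sum>i<n. f k (Suc i))"
      unfolding Y_def lin_sum[OF M] sc_sum f_def
      by (simp add: lin_sc[OF M] sc_sc mult.commute)
    then have "Y k - sc (\<omega> k * z) (M (Y k)) = (\<Sum>i<n. f k i - f k (Suc i))"
      unfolding Y_def by (simp add: sum_subtractf)
    also have "\<dots> = f k 0 - f k n" by (rule sum_lessThan_telescope')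
    also have "\<dots> = w0"
      unfolding f_def w0_def \<omega>_def using root_pow_n[OF n, of k] by (simp add: sc1 power_mult_distrib)
    finally show ?thesis .
  qed
  have b: "(\<Sum>k<n. Y k) = sc (of_nat n) y"
  proof -
    have "(\<Sum>k<n. Y k) = (\<Sum>i<n. \<Sum>k<n. f k i)" unfolding Y_def by (rule sum.swap)
    also have "\<dots> = (\<Sum>i<n. if i = 0 then sc (of_nat n) y else 0)"
    proof (rule sum.cong[OF refl])
      fix i assume i: "i \<in> {..<n}"
      have "(\<Sum>k<n. f k i) = sc (\<Sum>k<n. (\<omega> k * z) ^ i) ((M ^^ i) y)"
        unfolding f_def sum_sc ..
      also have "(\<Sum>k<n. (\<omega> k * z) ^ i) = z ^ i * (\<Sum>k<n. \<omega> k ^ i)"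
        by (simp add: power_mult_distrib sum_distrib_left mult.commute)
      also have "(\<Sum>k<n. \<omega> k ^ i) = (if i = 0 then of_nat n else 0)"
        using roots_sum[of i n] i unfolding \<omega>_def by auto
      finally show "(\<Sum>k<n. f k i) = (if i = 0 then sc (of_nat n) y else 0)"
        by (auto simp: sc1)
    qed
    also have "\<dots> = sc (of_nat n) y" using n by (simp add: sum.delta')
    finally show ?thesis .
  qed
  have c: "(\<Sum>k<n. h (Y k - sc (\<omega> k * z) (M (Y k))) (Y k)) = of_nat n * (h y y - z ^ n * h ((M ^^ n) y) y)"
  proof -
    have "(\<Sum>k<n. h (Y k - sc (\<omega> k * z) (M (Y k))) (Y k)) = (\<Sum>k<n. h w0 (Y k))" by (simp add: a)
    also have "\<dots> = h w0 (sc (of_nat n) y)" unfolding b[symmetric] h_sum_r ..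
    also have "\<dots> = of_nat n * (h y y - z ^ n * h ((M ^^ n) y) y)"
      unfolding w0_def h_sc_r h_diff_l h_sc by simp
    finally show ?thesis .
  qed
  have d: "0 \<le> Re (h (Y k - sc (\<omega> k * z) (M (Y k))) (Y k))" for k
  proof -
    have "cmod (\<omega> k * z * h (M (Y k)) (Y k)) \<le> cmod z * (\<mu> * nn (Y k) ^ 2)"
      unfolding norm_mult \<omega>_def using hb[of "Y k"] by (simp add: mult_left_mono)
    also have "\<dots> = (cmod z * \<mu>) * nn (Y k) ^ 2" by simp
    also have "\<dots> \<le> nn (Y k) ^ 2" using z mu by (intro mult_left_le_one_le) auto
    finally have "Re (\<omega> k * z * h (M (Y k)) (Y k)) \<le> nn (Y k) ^ 2"
      using complex_Re_le_cmod order_trans by blast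
    then show ?thesis unfolding h_diff_l h_sc by (simp add: nn_sq)
  qed
  have "0 \<le> Re (\<Sum>k<n. h (Y k - sc (\<omega> k * z) (M (Y k))) (Y k))"
    unfolding Re_sum by (rule sum_nonneg) (use d in auto)
  then have "0 \<le> real n * (Re (h y y) - Re (z ^ n * h ((M ^^ n) y) y))" unfolding c by simp
  then show ?thesis using n by (simp add: nn_sq zero_le_mult_iff)
qed

lemma power_ineq:
  assumes M: "lin M" and mu: "\<mu> > 0" and hb: "\<And>y. cmod (h (M y) y) \<le> \<mu> * nn y ^ 2"
  shows "cmod (h ((M ^^ n) y) y) \<le> \<mu> ^ n * nn y ^ 2"
proof (cases "n = 0")
  case True then show ?thesis by (simp add: hxx norm_power)
next
  case False
  then have n: "n > 0" by simp
  define c where "c = h ((M ^^ n) y) y"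
  show ?thesis
  proof (cases "c = 0")
    case True then show ?thesis unfolding c_def[symmetric] using mu by simp
  next
    case False
    define z where "z = complex_of_real (1 / \<mu>) * cis (- Arg c / real n)"
    have zm: "cmod z * \<mu> \<le> 1" using mu unfolding z_def by (simp add: norm_mult norm_divide)
    have "z ^ n * c = complex_of_real (cmod c / \<mu> ^ n)"
    proof -
      have "z ^ n = complex_of_real (1 / \<mu> ^ n) * cis (- Arg c)"
        unfolding z_def power_mult_distrib Complex.DeMoivre using n by (simp add: power_divide)
      moreover have "c = complex_of_real (cmod c) * cis (Arg c)" using rcis_cmod_Arg[of c] by (simp add: rcis_def)
      ultimately have "z ^ n * c = complex_of_real (1 / \<mu> ^ n) * complex_of_real (cmod c) * (cis (- Arg c) * cis (Arg c))"
        by (metis (no_types, lifting) mult.assoc mult.left_commute)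
      also have "cis (- Arg c) * cis (Arg c) = 1" by (simp add: cis_mult)
      finally show ?thesis by simp
    qed
    then have "cmod c / \<mu> ^ n \<le> nn y ^ 2" using pearcy[OF M mu hb n zm, of y] unfolding c_def by simp
    then show ?thesis unfolding c_def[symmetric] using mu by (simp add: divide_le_eq mult.commute)
  qed
qed

end

locale hil =
  fixes sc :: "complex \<Rightarrow> 'h::ab_group_add \<Rightarrow> 'h" and ip :: "'h \<Rightarrow> 'h \<Rightarrow> complex"
  assumes hil: "complex_hilbert sc ip"
begin

lemma cinner: "cinner_space sc ip" using hil by (simp add: complex_hilbert_def)

sublocale sip sc ip
proof -
  note c = cinner[unfolded cinner_space_def]
  note c1 = c[THEN conjunct1]
  note c2 = c[THEN conjunct2, THEN conjunct1]
  note c3 = c[THEN conjunct2, THEN conjunct2, THEN conjunct1]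
  note c4 = c[THEN conjunct2, THEN conjunct2, THEN conjunct2, THEN conjunct1]
  note c5 = c[THEN conjunct2, THEN conjunct2, THEN conjunct2, THEN conjunct2, THEN conjunct1]
  note c6 = c[THEN conjunct2, THEN conjunct2, THEN conjunct2, THEN conjunct2, THEN conjunct2, THEN conjunct1]
  note c7 = c[THEN conjunct2, THEN conjunct2, THEN conjunct2, THEN conjunct2, THEN conjunct2, THEN conjunct2, THEN conjunct1]
  note c8 = c[THEN conjunct2, THEN conjunct2, THEN conjunct2, THEN conjunct2, THEN conjunct2, THEN conjunct2, THEN conjunct2, THEN conjunct1]
  show "sip sc ip"
    apply unfold_locales
    apply (rule c1[rule_format])
    apply (rule c2[rule_format])
    apply (rule c3[rule_format])
    apply (rule c4[rule_format])
    apply (rule c5[rule_format])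
    apply (rule c6[rule_format])
    apply (rule c7[rule_format])
    apply (rule c8[rule_format])
    done
qed

lemma hnorm_eq: "hnorm ip x = nn x" by (simp add: hnorm_def nn_def)

lemma ip_definite: "ip x x = 0 \<Longrightarrow> x = 0"
proof -
  have "\<forall>x. ip x x = 0 \<longrightarrow> x = 0" using cinner unfolding cinner_space_def by (elim conjE) assumption
  then show "ip x x = 0 \<Longrightarrow> x = 0" by blast
qed

lemma definite: "nn x = 0 \<Longrightarrow> x = 0"
  using hxx[of x] ip_definite[of x] by simp

lemma ip_zero_all: "(\<And>v. ip u v = 0) \<Longrightarrow> u = 0"
proof -
  assume "\<And>v. ip u v = 0"
  then have "ip u u = 0" by blast
  then have "nn u ^ 2 = 0" using hxx[of u] by simp
  then show "u = 0" using definite by simp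
qed

lemma complete:
  assumes "\<And>e. e > 0 \<Longrightarrow> \<exists>N. \<forall>m\<ge>N. \<forall>n\<ge>N. nn (X m - X n) < e"
  shows "\<exists>L. (\<lambda>n. nn (X n - L)) \<longlonglongrightarrow> 0"
proof -
  have "\<forall>X::nat \<Rightarrow> 'h. (\<forall>e>0. \<exists>N. \<forall>m\<ge>N. \<forall>n\<ge>N. nn (X m - X n) < e)
        \<longrightarrow> (\<exists>L. (\<lambda>n. nn (X n - L)) \<longlonglongrightarrow> 0)"
    using hil unfolding complex_hilbert_def hnorm_eq by (elim conjE) assumption
  then show ?thesis using assms by blast
qed

definition bdd_fun :: "('h \<Rightarrow> complex) \<Rightarrow> bool" where
  "bdd_fun \<phi> \<longleftrightarrow> (\<forall>x y. \<phi> (x + y) = \<phi> x + \<phi> y) \<and> (\<exists>C. \<forall>x. cmod (\<phi> x) \<le> C * nn x)"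

lemma bdd_fun_diff: "bdd_fun \<phi> \<Longrightarrow> \<phi> (x - y) = \<phi> x - \<phi> y"
  unfolding bdd_fun_def by (metis add_diff_cancel diff_add_cancel eq_diff_eq)

lemma ubp:
  assumes bf: "\<And>\<phi>. \<phi> \<in> \<Phi> \<Longrightarrow> bdd_fun \<phi>"
    and pw: "\<And>x. \<exists>K. \<forall>\<phi>\<in>\<Phi>. cmod (\<phi> x) \<le> K"
    and hom: "\<And>\<phi> a x. \<phi> \<in> \<Phi> \<Longrightarrow> \<phi> (sc (complex_of_real a) x) = complex_of_real a * \<phi> x"
  shows "\<exists>C. \<forall>\<phi>\<in>\<Phi>. \<forall>x. cmod (\<phi> x) \<le> C * nn x"
proof -
  interpret MS: Metric_space UNIV "\<lambda>x y. nn (x - y)"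
  proof
    show "nn (x - y) = nn (y - x)" for x y by (rule nn_diff_sym)
    show "nn (x - y) = 0 \<longleftrightarrow> x = y" for x y using definite[of "x - y"] by auto
    show "nn (x - z) \<le> nn (x - y) + nn (y - z)" for x y z by (rule nn_diff_triangle)
  qed simp
  have mc: "MS.mcomplete"
    unfolding MS.mcomplete_def
  proof (intro allI impI)
    fix \<sigma> assume "MS.MCauchy \<sigma>"
    then have "\<And>e. e > 0 \<Longrightarrow> \<exists>N. \<forall>m\<ge>N. \<forall>n\<ge>N. nn (\<sigma> m - \<sigma> n) < e"
      unfolding MS.MCauchy_def by meson
    then obtain L where L: "(\<lambda>n. nn (\<sigma> n - L)) \<longlonglongrightarrow> 0" using complete by blast
    show "\<exists>x. limitin MS.mtopology \<sigma> x sequentially"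
      unfolding MS.limit_metric_sequentially
    proof (rule exI[of _ L], intro conjI allI impI)
      fix e :: real assume "e > 0"
      then obtain N where "\<forall>n\<ge>N. \<bar>nn (\<sigma> n - L) - 0\<bar> < e" using L LIMSEQ_D by (metis real_norm_def)
      then show "\<exists>N. \<forall>n\<ge>N. \<sigma> n \<in> UNIV \<and> nn (\<sigma> n - L) < e" by auto
    qed simp
  qed
  define F where "F k = {x. \<forall>\<phi>\<in>\<Phi>. cmod (\<phi> x) \<le> real k}" for k :: nat
  have closed: "closedin MS.mtopology (F k)" for k
    unfolding MS.metric_closedin_iff_sequentially_closed
  proof (intro conjI allI impI)
    fix \<sigma> l assume a: "range \<sigma> \<subseteq> F k \<and> limitin MS.mtopology \<sigma> l sequentially"
    show "l \<in> F k" unfolding F_def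
    proof (intro CollectI ballI)
      fix \<phi> assume p: "\<phi> \<in> \<Phi>"
      then obtain C0 where C0': "\<And>x. cmod (\<phi> x) \<le> C0 * nn x" using bf unfolding bdd_fun_def by blast
      define C where "C = max C0 0"
      have C: "cmod (\<phi> x) \<le> C * nn x" for x
        using C0'[of x] mult_right_mono[of C0 C "nn x"] by (simp add: C_def)
      have C0: "C \<ge> 0" by (simp add: C_def)
      have le: "cmod (\<phi> l) \<le> real k + e" if e: "e > 0" for e
      proof -
        have "e / (C + 1) > 0" using e C0 by simp
        then obtain N where N: "\<forall>n\<ge>N. nn (\<sigma> n - l) < e / (C + 1)"
          using a unfolding MS.limit_metric_sequentially by blast
        have "\<phi> l = \<phi> (\<sigma> N) - \<phi> (\<sigma> N - l)" using bdd_fun_diff[OF bf[OF p]] by simp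
        then have "cmod (\<phi> l) \<le> cmod (\<phi> (\<sigma> N)) + cmod (\<phi> (\<sigma> N - l))" using norm_triangle_ineq4 by simp
        also have "cmod (\<phi> (\<sigma> N)) \<le> real k" using a p unfolding F_def by auto
        also have "cmod (\<phi> (\<sigma> N - l)) \<le> C * nn (\<sigma> N - l)" by (rule C)
        also have "\<dots> \<le> C * (e / (C + 1))" using N C0 by (intro mult_left_mono) (auto intro: less_imp_le)
        also have "\<dots> \<le> e" using aux_le[of C e] C0 e by simp
        finally show ?thesis by simp
      qed
      show "cmod (\<phi> l) \<le> real k" by (rule field_le_epsilon[OF le])
    qed
  qed simp
  have "\<exists>k. MS.mtopology interior_of F k \<noteq> {}"
  proof (rule ccontr)
    assume na: "\<not> (\<exists>k. MS.mtopology interior_of F k \<noteq> {})"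
    have G: "closedin MS.mtopology T \<and> MS.mtopology interior_of T = {}" if "T \<in> range F" for T
    proof -
      from that obtain k where "T = F k" by blast
      then show ?thesis using closed[of k] na by blast
    qed
    have "MS.mtopology interior_of \<Union>(range F) = {}"
      by (rule MS.metric_Baire_category_alt[OF mc countable_image[OF countableI_type] G])
    moreover have "\<Union>(range F) = UNIV"
    proof -
      have xF: "x \<in> F (nat \<lceil>K\<rceil>)" if K: "\<forall>\<phi>\<in>\<Phi>. cmod (\<phi> x) \<le> K" for x K
      proof -
        have "K \<le> real (nat \<lceil>K\<rceil>)" by (rule real_nat_ceiling_ge)
        then show ?thesis using K unfolding F_def by (auto intro: order_trans)
      qed
      have "x \<in> \<Union>(range F)" for x
      proof -
        obtain K where "\<forall>\<phi>\<in>\<Phi>. cmod (\<phi> x) \<le> K" using pw by blast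
        then have "x \<in> F (nat \<lceil>K\<rceil>)" by (rule xF)
        then show ?thesis by blast
      qed
      then show ?thesis by blast
    qed
    ultimately have "MS.mtopology interior_of UNIV = {}" by simp
    moreover have "MS.mtopology interior_of UNIV = UNIV"
      using interior_of_topspace[of MS.mtopology] MS.topspace_mtopology by simp
    ultimately show False by simp
  qed
  then obtain k x0 where x0: "x0 \<in> MS.mtopology interior_of F k" by blast
  have "openin MS.mtopology (MS.mtopology interior_of F k)" by simp
  then have "\<forall>x. x \<in> MS.mtopology interior_of F k \<longrightarrow> (\<exists>r>0. MS.mball x r \<subseteq> MS.mtopology interior_of F k)"
    unfolding MS.openin_mtopology by (rule conjunct2)
  with x0 obtain r where r0: "r > 0" and rb: "MS.mball x0 r \<subseteq> MS.mtopology interior_of F k" by blast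
  have r: "MS.mball x0 r \<subseteq> F k" using rb interior_of_subset[of MS.mtopology "F k"] by (rule subset_trans)
  have small: "cmod (\<phi> x) \<le> 2 * real k" if p: "\<phi> \<in> \<Phi>" and nx: "nn x < r" for \<phi> x
  proof -
    have "nn (x0 - (x0 + x)) = nn x" using nn_minus[of x] by simp
    then have "x0 + x \<in> MS.mball x0 r" "x0 \<in> MS.mball x0 r" using nx r0 by (auto simp: MS.mball_def)
    then have "x0 + x \<in> F k" "x0 \<in> F k" using r by auto
    then have 1: "cmod (\<phi> (x0 + x)) \<le> real k" and 2: "cmod (\<phi> x0) \<le> real k" using p unfolding F_def by auto
    have "\<phi> x = \<phi> (x0 + x) - \<phi> x0" using bdd_fun_diff[OF bf[OF p], of "x0 + x" x0] by simp
    then have "cmod (\<phi> x) \<le> cmod (\<phi> (x0 + x)) + cmod (\<phi> x0)" using norm_triangle_ineq4 by simp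
    then show ?thesis using 1 2 by simp
  qed
  show ?thesis
  proof (intro exI ballI allI)
    fix \<phi> x assume p: "\<phi> \<in> \<Phi>"
    show "cmod (\<phi> x) \<le> (4 * real k / r) * nn x"
    proof (cases "nn x = 0")
      case True
      then have "x = 0" by (rule definite)
      then show ?thesis using bdd_fun_diff[OF bf[OF p], of 0 0] by simp
    next
      case False
      then have nx: "nn x > 0" using nn_nonneg[of x] by linarith
      define t where "t = r / (2 * nn x)"
      have t: "t > 0" using r0 nx by (simp add: t_def)
      have "nn (sc (complex_of_real t) x) = t * nn x" using t by (simp add: nn_sc)
      also have "\<dots> = r / 2" using nx by (simp add: t_def)
      finally have "nn (sc (complex_of_real t) x) < r" using r0 by simp
      then have "cmod (\<phi> (sc (complex_of_real t) x)) \<le> 2 * real k" by (rule small[OF p])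
      then have "t * cmod (\<phi> x) \<le> 2 * real k" using hom[OF p] t by (simp add: norm_mult)
      then have "cmod (\<phi> x) \<le> 2 * real k / t" using t by (simp add: field_simps)
      also have "\<dots> = (4 * real k / r) * nn x" using r0 nx by (simp add: t_def field_simps)
      finally show ?thesis .
    qed
  qed
qed

end

locale hilA = hil sc ip for sc :: "complex \<Rightarrow> 'h::ab_group_add \<Rightarrow> 'h" and ip +
  fixes A :: "'h \<Rightarrow> 'h"
  assumes posA: "positive_op sc ip A"
begin

lemma A_add: "A (x + y) = A x + A y" using posA by (simp add: positive_op_def bounded_op_def)
lemma A_sc: "A (sc a x) = sc a (A x)" using posA by (simp add: positive_op_def bounded_op_def)
lemma A_pos: "Im (ip (A x) x) = 0 \<and> Re (ip (A x) x) \<ge> 0" using posA by (simp add: positive_op_def)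
lemma A_bdd: "\<exists>C. \<forall>x. nn (A x) \<le> C * nn x"
  using posA by (simp add: positive_op_def bounded_op_def hnorm_eq)
lemma linA: "lin A" by (simp add: lin_def A_add A_sc)

lemma A_sym_cnj: "ip (A y) x = cnj (ip (A x) y)"
proof -
  define p where "p = ip (A x) y"
  define q where "q = ip (A y) x"
  have r1: "Im (ip (A (x + y)) (x + y)) = 0" using A_pos by blast
  have r2: "Im (ip (A (x + sc \<i> y)) (x + sc \<i> y)) = 0" using A_pos by blast
  have e1: "ip (A (x + y)) (x + y) = ip (A x) x + ip (A y) y + p + q"
    unfolding p_def q_def by (simp add: A_add h_add h_add_r)
  have e2: "ip (A (x + sc \<i> y)) (x + sc \<i> y) = ip (A x) x + ip (A y) y - \<i> * p + \<i> * q"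
    unfolding p_def q_def by (simp add: A_add A_sc h_add h_add_r h_sc h_sc_r algebra_simps)
  have "Im p + Im q = 0" using r1 A_pos[of x] A_pos[of y] unfolding e1 by simp
  moreover have "Re q - Re p = 0" using r2 A_pos[of x] A_pos[of y] unfolding e2 by simp
  ultimately have "q = cnj p" by (simp add: complex_eq_iff)
  then show ?thesis unfolding p_def q_def .
qed

lemma A_sym: "ip (A x) y = ip x (A y)"
proof -
  have "ip x (A y) = cnj (ip (A y) x)" by (rule h_sym)
  also have "ip (A y) x = cnj (ip (A x) y)" by (rule A_sym_cnj)
  finally show ?thesis by simp
qed

sublocale sA: sip sc "\<lambda>x y. ip (A x) y"
proof unfold_locales
  show "ip (A y) x = cnj (ip (A x) y)" for x y by (rule A_sym_cnj)
qed (simp_all add: A_add A_sc h_add h_sc A_pos sc1 sc_sc sc_add add_sc)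

lemma sA_nn: "sA.nn x = Anorm ip A x" by (simp add: sA.nn_def Anorm_def)

lemma sA_le: "\<exists>CA\<ge>0. \<forall>u. sA.nn u ^ 2 \<le> CA * nn u ^ 2"
proof -
  obtain C where C: "\<And>x. nn (A x) \<le> C * nn x" using A_bdd by blast
  have "sA.nn u ^ 2 \<le> max C 0 * nn u ^ 2" for u
  proof -
    have "sA.nn u ^ 2 = Re (ip (A u) u)" by (rule sA.nn_sq)
    also have "\<dots> \<le> cmod (ip (A u) u)" by (rule complex_Re_le_cmod)
    also have "\<dots> \<le> nn (A u) * nn u" by (rule cs)
    also have "\<dots> \<le> (max C 0 * nn u) * nn u"
    proof (rule mult_right_mono)
      show "nn (A u) \<le> max C 0 * nn u" using C[of u] mult_right_mono[of C "max C 0" "nn u"] by simp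
    qed simp
    finally show ?thesis by (simp add: power2_eq_square mult.assoc)
  qed
  then show ?thesis by (intro exI[of _ "max C 0"]) auto
qed

end

locale hilAT = hilA sc ip A for sc :: "complex \<Rightarrow> 'h::ab_group_add \<Rightarrow> 'h" and ip and A +
  fixes T T' :: "'h \<Rightarrow> 'h"
  assumes bT: "bounded_op sc ip T" and adj: "is_adjoint ip T T'" and rng: "range (\<lambda>x. T' (A x)) \<subseteq> range A"
begin

lemma T_add: "T (x + y) = T x + T y" using bT by (simp add: bounded_op_def)
lemma T_sc: "T (sc a x) = sc a (T x)" using bT by (simp add: bounded_op_def)
lemma linT: "lin T" by (simp add: lin_def T_add T_sc)
lemma T_bdd: "\<exists>C\<ge>0. \<forall>x. nn (T x) \<le> C * nn x"
proof -
  obtain C where C: "\<And>x. nn (T x) \<le> C * nn x" using bT by (auto simp: bounded_op_def hnorm_eq)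
  have "nn (T x) \<le> max C 0 * nn x" for x using C[of x] mult_right_mono[of C "max C 0" "nn x"] by simp
  then show ?thesis by (intro exI[of _ "max C 0"]) auto
qed
lemma adj': "ip (T x) y = ip x (T' y)" using adj by (simp add: is_adjoint_def)
lemma adj_cnj: "ip (T' y) x = ip y (T x)"
proof -
  have "ip (T' y) x = cnj (ip x (T' y))" by (rule h_sym)
  also have "ip x (T' y) = ip (T x) y" by (rule adj'[symmetric])
  also have "cnj (ip (T x) y) = ip y (T x)" by (rule h_sym[symmetric])
  finally show ?thesis .
qed

lemma rngz: "\<exists>z. T' (A u) = A z" using rng by blast

lemma pointwise_formula: "T' (A u) = A z \<Longrightarrow> ip u (A (T x)) = cnj (ip (A x) z)"
proof -
  assume z: "T' (A u) = A z"
  have "ip u (A (T x)) = cnj (ip (A (T x)) u)" by (rule h_sym)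
  also have "ip (A (T x)) u = ip (T x) (A u)" by (rule A_sym)
  also have "\<dots> = ip x (A z)" by (simp add: adj' z)
  also have "\<dots> = ip (A x) z" by (simp add: A_sym)
  finally show ?thesis .
qed

lemma douglas: "\<exists>c\<ge>0. \<forall>x. nn (A (T x)) \<le> c * nn (A x)"
proof -
  define \<Phi> where "\<Phi> = {(\<lambda>u. ip u (A (T x))) | x. nn (A x) \<le> 1}"
  have "\<exists>C. \<forall>\<phi>\<in>\<Phi>. \<forall>u. cmod (\<phi> u) \<le> C * nn u"
  proof (rule ubp)
    fix \<phi> assume "\<phi> \<in> \<Phi>"
    then obtain x where x: "\<phi> = (\<lambda>u. ip u (A (T x)))" unfolding \<Phi>_def by blast
    show "bdd_fun \<phi>" unfolding bdd_fun_def x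
    proof (intro conjI allI exI)
      show "ip (u + v) (A (T x)) = ip u (A (T x)) + ip v (A (T x))" for u v by (rule h_add)
      show "cmod (ip u (A (T x))) \<le> nn (A (T x)) * nn u" for u using cs[of u "A (T x)"] by (simp add: mult.commute)
    qed
  next
    fix u
    obtain z where z: "T' (A u) = A z" using rngz by blast
    have "cmod (\<phi> u) \<le> nn z" if "\<phi> \<in> \<Phi>" for \<phi>
    proof -
      from that obtain x where x: "\<phi> = (\<lambda>u. ip u (A (T x)))" "nn (A x) \<le> 1" unfolding \<Phi>_def by blast
      have "cmod (\<phi> u) = cmod (ip (A x) z)" using pointwise_formula[OF z, of x] x by simp
      also have "\<dots> \<le> nn (A x) * nn z" by (rule cs)
      also have "\<dots> \<le> nn z" using x(2) by (simp add: mult_left_le_one_le)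
      finally show ?thesis .
    qed
    then show "\<exists>K. \<forall>\<phi>\<in>\<Phi>. cmod (\<phi> u) \<le> K" by blast
  next
    fix \<phi> a u assume "\<phi> \<in> \<Phi>"
    then obtain x where x: "\<phi> = (\<lambda>u. ip u (A (T x)))" unfolding \<Phi>_def by blast
    show "\<phi> (sc (complex_of_real a) u) = complex_of_real a * \<phi> u" unfolding x by (rule h_sc)
  qed
  then obtain C where C0: "\<forall>\<phi>\<in>\<Phi>. \<forall>u. cmod (\<phi> u) \<le> C * nn u" by blast
  have C: "cmod (ip u (A (T x))) \<le> C * nn u" if "nn (A x) \<le> 1" for x u
  proof -
    have mem: "(\<lambda>u. ip u (A (T x))) \<in> \<Phi>" unfolding \<Phi>_def using that by blast
    have "\<forall>u. cmod ((\<lambda>u. ip u (A (T x))) u) \<le> C * nn u" by (rule bspec[OF C0 mem])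
    then show ?thesis by simp
  qed
  have one: "nn (A (T x)) \<le> max C 0" if "nn (A x) \<le> 1" for x
  proof -
    have "nn (A (T x)) ^ 2 \<le> C * nn (A (T x))"
      using C[OF that, of "A (T x)"] by (simp add: hxx norm_power)
    then show ?thesis
      by (cases "nn (A (T x)) = 0") (auto simp: power2_eq_square mult_le_cancel_right)
  qed
  have "nn (A (T x)) \<le> max C 0 * nn (A x)" for x
  proof (cases "nn (A x) = 0")
    case True
    then have Ax: "A x = 0" by (rule definite)
    have "ip v (A (T x)) = 0" for v
    proof -
      obtain z where z: "T' (A v) = A z" using rngz by blast
      show ?thesis using pointwise_formula[OF z, of x] Ax by simp
    qed
    then have "ip (A (T x)) v = 0" for v using h_sym[of v "A (T x)"] by simp
    then have "A (T x) = 0" by (rule ip_zero_all)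
    then show ?thesis by simp
  next
    case False
    then have p: "nn (A x) > 0" using nn_nonneg[of "A x"] by linarith
    define x' where "x' = sc (complex_of_real (1 / nn (A x))) x"
    have "nn (A x') = 1" using p by (simp add: x'_def A_sc nn_sc norm_divide)
    then have "nn (A (T x')) \<le> max C 0" by (intro one) simp
    moreover have "nn (A (T x')) = nn (A (T x)) / nn (A x)" using p by (simp add: x'_def A_sc T_sc nn_sc norm_divide)
    ultimately show ?thesis using p by (simp add: divide_le_eq)
  qed
  then show ?thesis by (intro exI[of _ "max C 0"]) auto
qed

end

context sip begin
lemma nn_diff_sq: "nn (x - y) ^ 2 = nn x ^ 2 + nn y ^ 2 - 2 * Re (h x y)"
  using nn_add_sq[of x "- y"] by (simp add: nn_minus h_minus_r)
end

lemma lim_le_aux: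
  fixes a :: real
  assumes "\<And>n. a \<le> inverse (real (Suc n)) + b + k * e n" and "e \<longlonglongrightarrow> 0"
  shows "a \<le> b"
proof -
  have "(\<lambda>n. inverse (real (Suc n)) + b + k * e n) \<longlonglongrightarrow> 0 + b + k * 0"
    by (intro tendsto_intros LIMSEQ_inverse_real_of_nat assms(2))
  then show ?thesis using assms(1) by (intro LIMSEQ_le_const[of _ b]) auto
qed

lemma lim_le_aux2:
  fixes a :: real
  assumes "\<And>n. a \<le> b + k * e n" and "e \<longlonglongrightarrow> 0"
  shows "a \<le> b"
proof (rule lim_le_aux[OF _ assms(2), of _ _ k])
  fix n
  have "0 \<le> inverse (real (Suc n))" by simp
  then show "a \<le> inverse (real (Suc n)) + b + k * e n" using assms(1)[of n] by linarith
qed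

context hilAT begin

lemma riesz: "\<exists>c\<ge>0. \<forall>y. \<exists>z. A z = T' (A y) \<and> nn z \<le> c * nn y"
proof -
  obtain c where c0: "c \<ge> 0" and c: "\<And>x. nn (A (T x)) \<le> c * nn (A x)" using douglas by blast
  have "\<exists>z. A z = T' (A y) \<and> nn z \<le> c * nn y" for y
  proof -
    define lf where "lf v = ip y (A (T v))" for v
    have lfb: "cmod (lf v) \<le> c * nn y * nn (A v)" for v
    proof -
      have "cmod (lf v) \<le> nn y * nn (A (T v))" unfolding lf_def by (rule cs)
      also have "\<dots> \<le> nn y * (c * nn (A v))" using c by (simp add: mult_left_mono)
      finally show ?thesis by (simp add: mult_ac)
    qed
    have lf_add: "lf (u + v) = lf u + lf v" for u v unfolding lf_def by (simp add: T_add A_add h_add_r)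
    have lf_sc: "lf (sc a v) = cnj a * lf v" for a v unfolding lf_def by (simp add: T_sc A_sc h_sc_r)
    define \<Psi> where "\<Psi> v = nn (A v) ^ 2 - 2 * Re (lf v)" for v
    define b where "b = c * nn y"
    have lb: "- (b ^ 2) \<le> \<Psi> v" for v
    proof -
      have "Re (lf v) \<le> b * nn (A v)" using lfb[of v] complex_Re_le_cmod[of "lf v"] by (simp add: b_def)
      moreover have "2 * b * nn (A v) \<le> nn (A v) ^ 2 + b ^ 2"
        using zero_le_power2[of "nn (A v) - b"] unfolding power2_diff by (simp add: algebra_simps)
      ultimately show ?thesis unfolding \<Psi>_def by linarith
    qed
    define m where "m = Inf (range \<Psi>)"
    have bb: "bdd_below (range \<Psi>)" using lb by (intro bdd_belowI[of _ "- (b^2)"]) auto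
    have mle: "m \<le> \<Psi> v" for v unfolding m_def using bb by (simp add: cInf_lower)
    have ex: "\<forall>n. \<exists>v. \<Psi> v < m + inverse (real (Suc n))"
    proof
      fix n
      have "Inf (range \<Psi>) < m + inverse (real (Suc n))" unfolding m_def by simp
      then obtain p where "p \<in> range \<Psi>" "p < m + inverse (real (Suc n))" using cInf_lessD by blast
      then show "\<exists>v. \<Psi> v < m + inverse (real (Suc n))" by blast
    qed
    obtain vs where vs0: "\<forall>n. \<Psi> (vs n) < m + inverse (real (Suc n))" using choice[OF ex] by blast
    have vs: "\<Psi> (vs n) < m + inverse (real (Suc n))" for n using vs0 by blast
    define ws where "ws n = A (vs n)" for n
    have par: "nn (ws n - ws k) ^ 2 \<le> 2 * inverse (real (Suc n)) + 2 * inverse (real (Suc k))" for n k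
    proof -
      define mid where "mid = sc (1/2) (vs n + vs k)"
      have Amid: "A mid = sc (1/2) (ws n + ws k)" unfolding mid_def ws_def by (simp add: A_sc A_add)
      have "lf mid = (1/2) * (lf (vs n) + lf (vs k))" unfolding mid_def lf_sc lf_add by simp
      then have "Re (lf mid * 2) = Re (lf (vs n) + lf (vs k))" by simp
      then have re: "2 * Re (lf mid) = Re (lf (vs n)) + Re (lf (vs k))" by simp
      have "m \<le> (1/4) * nn (ws n + ws k) ^ 2 - 2 * Re (lf mid)"
        using mle[of mid] unfolding \<Psi>_def Amid nn_sc by (simp add: power_divide)
      then have "m \<le> (1/4) * nn (ws n + ws k) ^ 2 - Re (lf (vs n)) - Re (lf (vs k))" using re by linarith
      moreover have "nn (ws n - ws k) ^ 2 = 2 * nn (ws n) ^ 2 + 2 * nn (ws k) ^ 2 - nn (ws n + ws k) ^ 2"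
        unfolding nn_diff_sq nn_add_sq by simp
      moreover have "\<Psi> (vs n) < m + inverse (real (Suc n))" "\<Psi> (vs k) < m + inverse (real (Suc k))" using vs by auto
      ultimately show ?thesis unfolding \<Psi>_def ws_def by linarith
    qed
    have "\<exists>L. (\<lambda>n. nn (ws n - L)) \<longlonglongrightarrow> 0"
    proof (rule complete)
      fix e :: real assume e: "e > 0"
      have "e^2 / 4 > 0" using e by simp
      then obtain N where N: "inverse (real (Suc N)) < e^2 / 4" using reals_Archimedean by blast
      have "nn (ws p - ws q) < e" if "p \<ge> N" "q \<ge> N" for p q
      proof -
        have ip: "inverse (real (Suc p)) \<le> inverse (real (Suc N))" "inverse (real (Suc q)) \<le> inverse (real (Suc N))"
          using that by (auto simp: field_simps)
        have "nn (ws p - ws q) ^ 2 < e ^ 2" using par[of p q] ip N by linarith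
        then show ?thesis using e by (simp add: power_less_imp_less_base less_imp_le)
      qed
      then show "\<exists>N. \<forall>m\<ge>N. \<forall>n\<ge>N. nn (ws m - ws n) < e" by blast
    qed
    then obtain z where z: "(\<lambda>n. nn (ws n - z)) \<longlonglongrightarrow> 0" by blast
    have var: "ip z (A v) = lf v" for v
    proof (rule ccontr)
      assume ne: "ip z (A v) \<noteq> lf v"
      define \<delta> where "\<delta> = ip z (A v) - lf v"
      define N where "N = nn (A v)"
      define s where "s = 1 / (N^2 + 1)"
      have s: "s > 0" by (simp add: s_def add_nonneg_pos)
      have dpos: "cmod \<delta> > 0" using ne by (simp add: \<delta>_def)
      define t where "t = - (complex_of_real s * \<delta>)"
      have bound: "2 * s * cmod \<delta> ^ 2 \<le> inverse (real (Suc n)) + s^2 * cmod \<delta> ^ 2 * N^2 + (2 * s * cmod \<delta> * N) * nn (ws n - z)" for n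
      proof -
        have "m \<le> \<Psi> (vs n + sc t v)" by (rule mle)
        also have "\<Psi> (vs n + sc t v) = \<Psi> (vs n) + cmod t ^ 2 * N ^ 2 + 2 * Re (cnj t * (ip (ws n) (A v) - lf v))"
        proof -
          have "nn (A (vs n + sc t v)) ^ 2 = nn (ws n) ^ 2 + cmod t ^ 2 * N ^ 2 + 2 * Re (cnj t * ip (ws n) (A v))"
            unfolding ws_def N_def A_add A_sc nn_add_sq nn_sc h_sc_r by (simp add: power_mult_distrib)
          moreover have "Re (lf (vs n + sc t v)) = Re (lf (vs n)) + Re (cnj t * lf v)" by (simp add: lf_add lf_sc)
          ultimately show ?thesis unfolding \<Psi>_def ws_def by (simp add: algebra_simps)
        qed
        also have "ip (ws n) (A v) - lf v = \<delta> + ip (ws n - z) (A v)" unfolding \<delta>_def h_diff_l by simp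
        also have "Re (cnj t * (\<delta> + ip (ws n - z) (A v))) = - s * cmod \<delta> ^ 2 + Re (cnj t * ip (ws n - z) (A v))"
        proof -
          have "cnj t * \<delta> = - (complex_of_real s * (\<delta> * cnj \<delta>))" unfolding t_def by (simp add: mult_ac)
          also have "\<delta> * cnj \<delta> = complex_of_real (cmod \<delta> ^ 2)" using complex_norm_square[of \<delta>] by simp
          finally have "Re (cnj t * \<delta>) = - s * cmod \<delta> ^ 2" by simp
          then show ?thesis by (simp add: distrib_left)
        qed
        also have "Re (cnj t * ip (ws n - z) (A v)) \<le> s * cmod \<delta> * (nn (ws n - z) * N)"
        proof -
          have "Re (cnj t * ip (ws n - z) (A v)) \<le> cmod (cnj t * ip (ws n - z) (A v))" by (rule complex_Re_le_cmod)
          also have "\<dots> = s * cmod \<delta> * cmod (ip (ws n - z) (A v))" unfolding t_def using s by (simp add: norm_mult)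
          also have "\<dots> \<le> s * cmod \<delta> * (nn (ws n - z) * N)" unfolding N_def using s by (intro mult_left_mono cs) auto
          finally show ?thesis .
        qed
        also have "cmod t = s * cmod \<delta>" unfolding t_def using s by (simp add: norm_mult)
        finally have "m \<le> \<Psi> (vs n) + (s * cmod \<delta>) ^ 2 * N ^ 2 + 2 * (- s * cmod \<delta> ^ 2 + s * cmod \<delta> * (nn (ws n - z) * N))"
          by simp
        then show ?thesis using vs[of n] by (simp add: power_mult_distrib algebra_simps)
      qed
      have "2 * s * cmod \<delta> ^ 2 \<le> s^2 * cmod \<delta> ^ 2 * N^2" by (rule lim_le_aux[OF bound z])
      then have "2 * (s * cmod \<delta> ^ 2) \<le> (s * cmod \<delta> ^ 2) * (s * N^2)" by (simp add: power2_eq_square mult_ac)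
      then have "2 \<le> s * N^2" using s dpos by (simp add: mult_le_cancel_left_pos)
      moreover have "s * N^2 < 1" unfolding s_def by (simp add: add_nonneg_pos)
      ultimately show False by simp
    qed
    have nz: "nn z ^ 2 \<le> c * nn y * nn z"
    proof (rule lim_le_aux2[OF _ z])
      fix n
      have e1: "nn z ^ 2 = Re (ip z (ws n)) + Re (ip z (z - ws n))" unfolding h_diff_r by (simp add: nn_sq)
      have e2: "Re (ip z (ws n)) \<le> c * nn y * nn (ws n)"
        using var[of "vs n"] lfb[of "vs n"] complex_Re_le_cmod[of "ip z (ws n)"] unfolding ws_def by simp
      have e3: "Re (ip z (z - ws n)) \<le> nn z * nn (ws n - z)"
        using cs[of z "z - ws n"] complex_Re_le_cmod[of "ip z (z - ws n)"] nn_diff_sym[of z "ws n"] by simp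
      have e4: "nn (ws n) \<le> nn z + nn (ws n - z)" using nn_triangle[of z "ws n - z"] by simp
      have e5: "c * nn y * nn (ws n) \<le> c * nn y * (nn z + nn (ws n - z))"
        by (rule mult_left_mono[OF e4]) (simp add: c0)
      have e6: "c * nn y * (nn z + nn (ws n - z)) + nn z * nn (ws n - z) = c * nn y * nn z + (c * nn y + nn z) * nn (ws n - z)"
        by (simp add: algebra_simps)
      show "nn z ^ 2 \<le> c * nn y * nn z + (c * nn y + nn z) * nn (ws n - z)"
        using e1 e2 e3 e5 e6 by linarith
    qed
    have "nn z \<le> c * nn y"
    proof (cases "nn z = 0")
      case True then show ?thesis using c0 by simp
    next
      case False
      then have "nn z > 0" using nn_nonneg[of z] by linarith
      then show ?thesis using nz by (simp add: power2_eq_square mult_le_cancel_right)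
    qed
    moreover have "A z = T' (A y)"
    proof -
      have "ip (A z - T' (A y)) v = 0" for v
      proof -
        have "ip (A z) v = lf v" using var[of v] by (simp add: A_sym)
        moreover have "ip (T' (A y)) v = lf v" unfolding lf_def adj_cnj by (simp add: A_sym)
        ultimately show ?thesis by (simp add: h_diff_l)
      qed
      then show ?thesis using ip_zero_all[of "A z - T' (A y)"] by simp
    qed
    ultimately show ?thesis by blast
  qed
  then show ?thesis using c0 by blast
qed

end

lemma cancel_aux: "a > 0 \<Longrightarrow> p > 0 \<Longrightarrow> s > 0 \<Longrightarrow> X * a * p / (a * (p * s)) = X / (s::real)"
  by (simp add: field_simps)

lemma pow_unbounded_aux:
  fixes q B :: real
  assumes q: "q > 1" and H: "\<And>j. q ^ (2 ^ j) \<le> B"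
  shows False
proof -
  obtain j where j: "B < q ^ j" using real_arch_pow[OF q] by blast
  have "j \<le> 2 ^ j" by (simp add: less_imp_le)
  then have "q ^ j \<le> q ^ (2 ^ j)" using q by (simp add: power_increasing)
  then show False using H[of j] j by simp
qed

context hilAT begin

lemma A_bounded_T: "\<exists>L\<ge>0. \<forall>x. sA.nn (T x) \<le> L * sA.nn x"
proof -
  obtain c where c0: "c \<ge> 0" and cz: "\<And>y. \<exists>z. A z = T' (A y) \<and> nn z \<le> c * nn y" using riesz by blast
  obtain CT where CT0: "CT \<ge> 0" and CT: "\<And>x. nn (T x) \<le> CT * nn x" using T_bdd by blast
  obtain CA where CA0: "CA \<ge> 0" and CA: "\<And>u. sA.nn u ^ 2 \<le> CA * nn u ^ 2" using sA_le by blast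
  define W where "W y = (SOME z. A z = T' (A y) \<and> nn z \<le> c * nn y)" for y
  have W: "A (W y) = T' (A y) \<and> nn (W y) \<le> c * nn y" for y
    unfolding W_def using someI_ex[OF cz[of y]] .
  define K where "K u = W (T u)" for u
  have KA: "ip (A (K u)) v = ip (A (T u)) (T v)" for u v
    unfolding K_def using W[of "T u"] by (simp add: adj_cnj)
  have Ksym: "ip (A (K u)) v = ip (A u) (K v)" for u v
  proof -
    have "ip (A u) (K v) = ip u (A (K v))" by (rule A_sym)
    also have "\<dots> = cnj (ip (A (K v)) u)" by (rule h_sym)
    also have "ip (A (K v)) u = ip (A (T v)) (T u)" by (rule KA)
    also have "cnj (ip (A (T v)) (T u)) = ip (T u) (A (T v))" by (rule h_sym[symmetric])
    also have "\<dots> = ip (A (T u)) (T v)" by (rule A_sym[symmetric])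
    finally show ?thesis using KA by simp
  qed
  have Kmsym: "ip (A ((K ^^ m) u)) v = ip (A u) ((K ^^ m) v)" for m u v
  proof (induction m arbitrary: u v)
    case 0 then show ?case by simp
  next
    case (Suc m)
    have "ip (A ((K ^^ Suc m) u)) v = ip (A (K ((K ^^ m) u))) v" by simp
    also have "\<dots> = ip (A ((K ^^ m) u)) (K v)" by (rule Ksym)
    also have "\<dots> = ip (A u) ((K ^^ m) (K v))" by (rule Suc)
    also have "(K ^^ m) (K v) = (K ^^ Suc m) v" by (simp add: funpow_swap1)
    finally show ?case .
  qed
  define L where "L = c * CT + 1"
  have L: "L > 0" using c0 CT0 by (simp add: L_def add_nonneg_pos)
  have Kb: "nn (K u) \<le> (c * CT) * nn u" for u
  proof -
    have "nn (K u) \<le> c * nn (T u)" using W[of "T u"] by (simp add: K_def)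
    also have "\<dots> \<le> c * (CT * nn u)" using CT[of u] c0 by (simp add: mult_left_mono)
    finally show ?thesis by (simp add: mult_ac)
  qed
  have Kmb: "nn ((K ^^ m) u) \<le> (c * CT) ^ m * nn u" for m u
  proof (induction m)
    case 0 then show ?case by simp
  next
    case (Suc m)
    have "nn ((K ^^ Suc m) u) \<le> (c * CT) * nn ((K ^^ m) u)" using Kb by simp
    also have "\<dots> \<le> (c * CT) * ((c * CT) ^ m * nn u)" using Suc c0 CT0 by (simp add: mult_left_mono)
    finally show ?case by (simp add: mult_ac)
  qed
  have Kx: "sA.nn (K x) \<le> L * sA.nn x" for x
  proof -
    define s where "s m = sA.nn ((K ^^ m) x)" for m
    have s0: "s m \<ge> 0" for m by (simp add: s_def)
    have sq: "s m ^ 2 \<le> s (2 * m) * s 0" for m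
    proof -
      have e1: "s m ^ 2 = Re (ip (A ((K ^^ m) x)) ((K ^^ m) x))" unfolding s_def sA.nn_sq ..
      have e2: "ip (A ((K ^^ m) x)) ((K ^^ m) x) = ip (A ((K ^^ m) ((K ^^ m) x))) x" by (rule Kmsym[symmetric])
      have e3: "(K ^^ m) ((K ^^ m) x) = (K ^^ (2 * m)) x" by (simp add: mult_2 funpow_add)
      have e4: "Re (ip (A ((K ^^ (2 * m)) x)) x) \<le> cmod (ip (A ((K ^^ (2 * m)) x)) x)" by (rule complex_Re_le_cmod)
      have e5: "cmod (ip (A ((K ^^ (2 * m)) x)) x) \<le> sA.nn ((K ^^ (2 * m)) x) * sA.nn x" by (rule sA.cs)
      have e6: "sA.nn ((K ^^ (2 * m)) x) * sA.nn x = s (2 * m) * s 0" by (simp add: s_def)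
      show ?thesis using e1 e2 e3 e4 e5 e6 by simp
    qed
    have P: "s 1 ^ (2 ^ j) \<le> s (2 ^ j) * s 0 ^ (2 ^ j - 1)" for j
    proof (induction j)
      case 0 then show ?case by simp
    next
      case (Suc j)
      have p2: "(2::nat) ^ Suc j = 2 ^ j * 2" by simp
      have st1: "s 1 ^ (2 ^ Suc j) = (s 1 ^ (2 ^ j)) ^ 2" unfolding p2 by (rule power_mult)
      have st2: "(s 1 ^ (2 ^ j)) ^ 2 \<le> (s (2 ^ j) * s 0 ^ (2 ^ j - 1)) ^ 2"
        by (rule power_mono[OF Suc.IH]) (simp add: s0)
      have st3: "(s (2 ^ j) * s 0 ^ (2 ^ j - 1)) ^ 2 = s (2 ^ j) ^ 2 * s 0 ^ (2 * (2 ^ j - 1))"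
      proof -
        have "(s 0 ^ (2 ^ j - 1)) ^ 2 = s 0 ^ ((2 ^ j - 1) * 2)" by (rule power_mult[symmetric])
        then show ?thesis by (simp only: power_mult_distrib mult.commute)
      qed
      have st4: "s (2 ^ j) ^ 2 * s 0 ^ (2 * (2 ^ j - 1)) \<le> (s (2 * 2 ^ j) * s 0) * s 0 ^ (2 * (2 ^ j - 1))"
        by (rule mult_right_mono[OF sq[of "2 ^ j"]]) (simp add: s0)
      have st5: "(s (2 * 2 ^ j) * s 0) * s 0 ^ (2 * (2 ^ j - 1)) = s (2 ^ Suc j) * s 0 ^ (2 ^ Suc j - 1)"
      proof -
        have "(1::nat) \<le> 2 ^ j" by simp
        define k where "k = (2::nat) ^ j - 1"
        have k: "(2::nat) ^ j = k + 1" using \<open>1 \<le> 2 ^ j\<close> by (simp add: k_def)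
        have "(2::nat) ^ Suc j - 1 = Suc (2 * (2 ^ j - 1))" unfolding power_Suc k by simp
        moreover have "(2::nat) ^ Suc j = 2 * 2 ^ j" by simp
        ultimately show ?thesis by (simp only: power_Suc mult.assoc mult.left_commute)
      qed
      show ?case using st1 st2 st3 st4 st5 by linarith
    qed
    have growth: "s m \<le> sqrt CA * nn x * (c * CT) ^ m" for m
    proof -
      have g1: "s m ^ 2 \<le> CA * nn ((K ^^ m) x) ^ 2" unfolding s_def by (rule CA)
      have g2: "nn ((K ^^ m) x) ^ 2 \<le> ((c * CT) ^ m * nn x) ^ 2"
        by (rule power_mono[OF Kmb]) simp
      have g3: "CA * nn ((K ^^ m) x) ^ 2 \<le> CA * ((c * CT) ^ m * nn x) ^ 2"
        by (rule mult_left_mono[OF g2 CA0])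
      have g4: "CA * ((c * CT) ^ m * nn x) ^ 2 = (sqrt CA * nn x * (c * CT) ^ m) ^ 2"
        using CA0 by (simp add: power_mult_distrib)
      have "s m ^ 2 \<le> (sqrt CA * nn x * (c * CT) ^ m) ^ 2" using g1 g3 g4 by linarith
      moreover have "0 \<le> sqrt CA * nn x * (c * CT) ^ m" using CA0 c0 CT0 by simp
      ultimately show ?thesis by (rule power2_le_imp_le)
    qed
    show ?thesis
    proof (cases "s 0 = 0")
      case True
      have "s 1 ^ 2 \<le> s 2 * s 0" using sq[of 1] by simp
      then have "s 1 ^ 2 \<le> 0" using True by simp
      then have "s 1 = 0" by simp
      then have "sA.nn (K x) = 0" by (simp add: s_def)
      moreover have "0 \<le> L * sA.nn x" using L by simp
      ultimately show ?thesis by simp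
    next
      case False
      then have sp: "s 0 > 0" using s0[of 0] by linarith
      show ?thesis
      proof (rule ccontr)
        assume "\<not> ?thesis"
        then have gt: "s 1 > L * s 0" unfolding s_def by simp
        define q where "q = s 1 / (L * s 0)"
        have Ls: "L * s 0 > 0" using L sp by simp
        then have q: "q > 1" using gt unfolding q_def by (simp add: less_divide_eq)
        have qb: "q ^ (2 ^ j) \<le> sqrt CA * nn x / s 0" for j
        proof -
          define N :: nat where "N = 2 ^ j"
          have N: "N \<ge> 1" by (simp add: N_def)
          have h1: "s 1 ^ N \<le> s N * s 0 ^ (N - 1)" unfolding N_def by (rule P)
          have h2: "s N * s 0 ^ (N - 1) \<le> (sqrt CA * nn x * (c * CT) ^ N) * s 0 ^ (N - 1)"
            by (rule mult_right_mono[OF growth]) (simp add: s0)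
          have h3: "(c * CT) ^ N \<le> L ^ N" by (rule power_mono) (simp_all add: L_def c0 CT0)
          have h4: "sqrt CA * nn x * (c * CT) ^ N \<le> sqrt CA * nn x * L ^ N"
            by (rule mult_left_mono[OF h3]) (simp add: CA0)
          have h5: "(sqrt CA * nn x * (c * CT) ^ N) * s 0 ^ (N - 1) \<le> (sqrt CA * nn x * L ^ N) * s 0 ^ (N - 1)"
            by (rule mult_right_mono[OF h4]) (simp add: s0)
          have h6: "s 1 ^ N \<le> sqrt CA * nn x * L ^ N * s 0 ^ (N - 1)" using h1 h2 h5 by linarith
          have h7: "q ^ N = s 1 ^ N / (L ^ N * s 0 ^ N)" by (simp add: q_def power_divide power_mult_distrib)
          have pos: "L ^ N * s 0 ^ N > 0" using L sp by simp
          have h8: "s 1 ^ N / (L ^ N * s 0 ^ N) \<le> sqrt CA * nn x * L ^ N * s 0 ^ (N - 1) / (L ^ N * s 0 ^ N)"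
            by (rule divide_right_mono[OF h6]) (use pos in simp)
          have h9: "s 0 ^ N = s 0 ^ (N - 1) * s 0" using power_minus_mult[of N "s 0"] N by simp
          have h10: "sqrt CA * nn x * L ^ N * s 0 ^ (N - 1) / (L ^ N * s 0 ^ N) = sqrt CA * nn x / s 0"
            unfolding h9 by (rule cancel_aux) (use L sp in simp_all)
          show ?thesis using h7 h8 h10 unfolding N_def by simp
        qed
        show False by (rule pow_unbounded_aux[OF q qb])
      qed
    qed
  qed
  have "sA.nn (T x) \<le> sqrt L * sA.nn x" for x
  proof -
    have f1: "sA.nn (T x) ^ 2 = Re (ip (A (T x)) (T x))" unfolding sA.nn_sq ..
    have f2: "ip (A (T x)) (T x) = ip (A (K x)) x" by (rule KA[symmetric])
    have f3: "Re (ip (A (K x)) x) \<le> cmod (ip (A (K x)) x)" by (rule complex_Re_le_cmod)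
    have f4: "cmod (ip (A (K x)) x) \<le> sA.nn (K x) * sA.nn x" by (rule sA.cs)
    have f5: "sA.nn (K x) * sA.nn x \<le> (L * sA.nn x) * sA.nn x" by (rule mult_right_mono[OF Kx]) simp
    have f6: "(sqrt L * sA.nn x) ^ 2 = (L * sA.nn x) * sA.nn x" using L by (simp add: power_mult_distrib power2_eq_square)
    have "sA.nn (T x) ^ 2 \<le> (sqrt L * sA.nn x) ^ 2" using f1 f2 f3 f4 f5 f6 by simp
    moreover have "0 \<le> sqrt L * sA.nn x" using L by simp
    ultimately show ?thesis by (rule power2_le_imp_le)
  qed
  then show ?thesis using L by (intro exI[of _ "sqrt L"]) auto
qed

end

context hilA begin

lemma BA_props:
  assumes "X \<in> BA sc ip A"
  shows "lin X \<and> (\<exists>L\<ge>0. \<forall>x. sA.nn (X x) \<le> L * sA.nn x)"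
proof -
  from assms obtain X' where bX: "bounded_op sc ip X" and adj: "is_adjoint ip X X'"
    and rng: "range (\<lambda>x. X' (A x)) \<subseteq> range A" unfolding BA_def by blast
  interpret t: hilAT sc ip A X X'
    unfolding hilAT_def hilAT_axioms_def hilA_def hilA_axioms_def hil_def
    using hil posA bX adj rng by blast
  show ?thesis using t.linT t.A_bounded_T by blast
qed

lemma exists_unit: assumes "\<exists>x. A x \<noteq> 0" shows "\<exists>x. sA.nn x = 1"
proof -
  have "\<exists>x. sA.nn x \<noteq> 0"
  proof (rule ccontr)
    assume "\<not> ?thesis"
    then have z: "sA.nn x = 0" for x by blast
    have "A x = 0" for x
    proof (rule ip_zero_all)
      fix v
      have "cmod (ip (A x) v) \<le> sA.nn x * sA.nn v" by (rule sA.cs)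
      then show "ip (A x) v = 0" using z[of x] by simp
    qed
    then show False using assms by blast
  qed
  then obtain x where x: "sA.nn x \<noteq> 0" by blast
  then have xp: "sA.nn x > 0" using sA.nn_nonneg[of x] by linarith
  have "sA.nn (sc (complex_of_real (1 / sA.nn x)) x) = 1" using xp by (simp add: sA.nn_sc norm_divide)
  then show ?thesis by blast
qed

lemma numrad_bound:
  assumes B: "lin B" and L: "\<And>x. sA.nn (B x) \<le> L * sA.nn x" and u: "\<exists>x. sA.nn x = 1"
  shows "0 \<le> Anumrad ip A B" and "\<And>x. cmod (ip (A (B x)) x) \<le> Anumrad ip A B * sA.nn x ^ 2"
proof -
  define St where "St = {cmod (ip (A (B x)) x) | x. Anorm ip A x = 1}"
  have nr: "Anumrad ip A B = Sup St" unfolding Anumrad_def St_def ..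
  have ne: "St \<noteq> {}" using u unfolding St_def sA_nn by blast
  have le: "cmod (ip (A (B x)) x) \<le> sA.nn (B x) * sA.nn x" for x by (rule sA.cs)
  have bdd: "bdd_above St"
  proof (rule bdd_aboveI)
    fix p assume "p \<in> St"
    then obtain x where "p = cmod (ip (A (B x)) x)" "sA.nn x = 1" unfolding St_def sA_nn by blast
    then show "p \<le> L" using le[of x] L[of x] by simp
  qed
  have one: "cmod (ip (A (B x)) x) \<le> Sup St" if "sA.nn x = 1" for x
  proof (rule cSup_upper[OF _ bdd])
    show "cmod (ip (A (B x)) x) \<in> St" unfolding St_def sA_nn[symmetric] using that by blast
  qed
  obtain x1 where x1: "sA.nn x1 = 1" using u by blast
  show "0 \<le> Anumrad ip A B" unfolding nr using one[OF x1] norm_ge_zero order_trans by blast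
  fix x
  show "cmod (ip (A (B x)) x) \<le> Anumrad ip A B * sA.nn x ^ 2"
  proof (cases "sA.nn x = 0")
    case True
    have "cmod (ip (A (B x)) x) \<le> 0" using le[of x] True by simp
    then show ?thesis using True by simp
  next
    case False
    then have xp: "sA.nn x > 0" using sA.nn_nonneg[of x] by linarith
    define t where "t = 1 / sA.nn x"
    have t: "t > 0" using xp by (simp add: t_def)
    have "sA.nn (sc (complex_of_real t) x) = 1" using xp by (simp add: sA.nn_sc norm_divide t_def)
    then have "cmod (ip (A (B (sc (complex_of_real t) x))) (sc (complex_of_real t) x)) \<le> Sup St" by (rule one)
    moreover have "ip (A (B (sc (complex_of_real t) x))) (sc (complex_of_real t) x) = complex_of_real (t^2) * ip (A (B x)) x"
      using lin_sc[OF B] by (simp add: A_sc h_sc h_sc_r power2_eq_square)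
    ultimately have "t^2 * cmod (ip (A (B x)) x) \<le> Sup St" using t by (simp add: norm_mult norm_power)
    then have "cmod (ip (A (B x)) x) \<le> Sup St / t^2" using t by (simp add: field_simps)
    also have "Sup St / t^2 = Sup St * sA.nn x ^ 2" using xp by (simp add: t_def power_divide)
    finally show ?thesis unfolding nr .
  qed
qed

lemma opnorm_bound:
  assumes C: "\<And>x. sA.nn (B x) \<le> C * sA.nn x" and u: "\<exists>x. sA.nn x = 1"
  shows "0 \<le> Aopnorm ip A B" and "Aopnorm ip A B \<le> C"
proof -
  define St where "St = {Anorm ip A (B x) | x. Anorm ip A x = 1}"
  have nr: "Aopnorm ip A B = Sup St" unfolding Aopnorm_def St_def ..
  have ne: "St \<noteq> {}" using u unfolding St_def sA_nn by blast
  have ub: "p \<le> C" if "p \<in> St" for p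
  proof -
    from that obtain x where "p = sA.nn (B x)" "sA.nn x = 1" unfolding St_def sA_nn by blast
    then show ?thesis using C[of x] by simp
  qed
  then have bdd: "bdd_above St" by (rule bdd_aboveI)
  obtain x1 where x1: "sA.nn x1 = 1" using u by blast
  have "sA.nn (B x1) \<in> St" unfolding St_def sA_nn[symmetric] using x1 by blast
  then have "sA.nn (B x1) \<le> Sup St" by (rule cSup_upper[OF _ bdd])
  then show "0 \<le> Aopnorm ip A B" unfolding nr using sA.nn_nonneg[of "B x1"] by linarith
  show "Aopnorm ip A B \<le> C" unfolding nr by (rule cSup_least[OF ne ub])
qed

end

lemma eig_bound:
  fixes a d g s t :: real
  assumes a: "a \<ge> 0" and d: "d \<ge> 0" and g: "g \<ge> 0"
  shows "a * s^2 + d * t^2 + g * s * t \<le> ((a + d) / 2 + sqrt ((a - d)^2 + g^2) / 2) * (s^2 + t^2)"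
proof -
  define r where "r = sqrt ((a - d)^2 + g^2)"
  have r2: "r^2 = (a - d)^2 + g^2" unfolding r_def by simp
  have r0: "r \<ge> 0" unfolding r_def by simp
  have rge: "\<bar>a - d\<bar> \<le> r" unfolding r_def by (rule real_le_rsqrt) simp
  have rge1: "a - d \<le> r" "d - a \<le> r" using rge by auto
  define \<alpha> where "\<alpha> = (d - a + r) / 2"
  define \<beta> where "\<beta> = (a - d + r) / 2"
  have \<alpha>0: "\<alpha> \<ge> 0" proof -
    have "0 \<le> d - a + r" using rge1(1) by linarith
    then show ?thesis unfolding \<alpha>_def by simp
  qed
  have \<beta>0: "\<beta> \<ge> 0" proof -
    have "0 \<le> a - d + r" using rge1(2) by linarith
    then show ?thesis unfolding \<beta>_def by simp
  qed
  have ab: "4 * (\<alpha> * \<beta>) = g^2" unfolding \<alpha>_def \<beta>_def using r2 by (simp add: algebra_simps power2_eq_square)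
  have key: "0 \<le> \<alpha> * s^2 + \<beta> * t^2 - g * s * t"
  proof (cases "\<alpha> = 0")
    case True
    then have "g = 0" using ab by simp
    then show ?thesis using True \<beta>0 by simp
  next
    case False
    then have ap: "\<alpha> > 0" using \<alpha>0 by linarith
    have "\<alpha> * (\<alpha> * s^2 + \<beta> * t^2 - g * s * t) = (\<alpha> * s - g * t / 2)^2 + (\<alpha> * \<beta> - g^2 / 4) * t^2"
      by (simp add: algebra_simps power2_eq_square)
    also have "\<alpha> * \<beta> - g^2 / 4 = 0" using ab by simp
    finally have "\<alpha> * (\<alpha> * s^2 + \<beta> * t^2 - g * s * t) \<ge> 0" by simp
    then show ?thesis using ap by (simp add: zero_le_mult_iff)
  qed
  have "((a + d) / 2 + r / 2) * (s^2 + t^2) - (a * s^2 + d * t^2 + g * s * t) = \<alpha> * s^2 + \<beta> * t^2 - g * s * t"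
    unfolding \<alpha>_def \<beta>_def by (simp add: field_simps)
  then show ?thesis using key unfolding r_def by linarith
qed

lemma funpow_comp_pt: "((\<lambda>x. f (g x)) ^^ Suc n) x = f (((\<lambda>y. g (f y)) ^^ n) (g x))"
  by (induction n arbitrary: x) (simp_all add: funpow_swap1)

context sip begin
lemma lin_plus: "lin B \<Longrightarrow> lin C \<Longrightarrow> lin (\<lambda>x. B x + C x)"
  unfolding lin_def by (simp add: sc_add algebra_simps)
lemma lin_minus_op: "lin B \<Longrightarrow> lin C \<Longrightarrow> lin (\<lambda>x. B x - C x)"
  unfolding lin_def by (simp add: sc_diff algebra_simps)
lemma lin_comp': "lin B \<Longrightarrow> lin C \<Longrightarrow> lin (\<lambda>x. B (C x))"
  unfolding lin_def by simp
lemma nn_diff_le: "nn (x - y) \<le> nn x + nn y"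
  using nn_triangle[of x "- y"] nn_minus[of y] by simp
end

context hilA begin

definition sc2 :: "complex \<Rightarrow> 'h \<times> 'h \<Rightarrow> 'h \<times> 'h" where "sc2 a p = (sc a (fst p), sc a (snd p))"
definition h2 :: "'h \<times> 'h \<Rightarrow> 'h \<times> 'h \<Rightarrow> complex" where
  "h2 p q = ip (A (fst p)) (fst q) + ip (A (snd p)) (snd q)"

lemma sip2: "sip sc2 h2"
proof unfold_locales
  fix x y z :: "'h \<times> 'h" and a b :: complex
  show "sc2 1 x = x" by (simp add: sc2_def sc1)
  show "sc2 a (sc2 b x) = sc2 (a * b) x" by (simp add: sc2_def sc_sc)
  show "sc2 a (x + y) = sc2 a x + sc2 a y" by (simp add: sc2_def sc_add)
  show "sc2 (a + b) x = sc2 a x + sc2 b x" by (simp add: sc2_def add_sc)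
  show "h2 (x + y) z = h2 x z + h2 y z" by (simp add: h2_def A_add h_add)
  show "h2 (sc2 a x) y = a * h2 x y" by (simp add: h2_def sc2_def A_sc h_sc algebra_simps)
  show "h2 y x = cnj (h2 x y)" unfolding h2_def using A_sym_cnj[of "fst y" "fst x"] A_sym_cnj[of "snd y" "snd x"] by simp
  show "Im (h2 x x) = 0 \<and> 0 \<le> Re (h2 x x)" unfolding h2_def using A_pos[of "fst x"] A_pos[of "snd x"] by simp
qed

sublocale S2: sip sc2 h2 by (rule sip2)

lemma S2_nn_sq: "S2.nn p ^ 2 = sA.nn (fst p) ^ 2 + sA.nn (snd p) ^ 2"
  unfolding S2.nn_sq sA.nn_sq h2_def by simp

lemma S2_fst: "sA.nn (fst p) \<le> S2.nn p"
proof -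
  have "sA.nn (fst p) ^ 2 \<le> S2.nn p ^ 2" using S2_nn_sq[of p] by simp
  then show ?thesis by (rule power2_le_imp_le) simp
qed

lemma S2_snd: "sA.nn (snd p) \<le> S2.nn p"
proof -
  have "sA.nn (snd p) ^ 2 \<le> S2.nn p ^ 2" using S2_nn_sq[of p] by simp
  then show ?thesis by (rule power2_le_imp_le) simp
qed

lemma S2_le_sum: "S2.nn p \<le> sA.nn (fst p) + sA.nn (snd p)"
proof -
  have "0 \<le> 2 * sA.nn (fst p) * sA.nn (snd p)" by simp
  then have "S2.nn p ^ 2 \<le> (sA.nn (fst p) + sA.nn (snd p)) ^ 2"
    unfolding S2_nn_sq power2_sum by linarith
  then show ?thesis by (rule power2_le_imp_le) simp
qed

end

context hilA begin

lemma bcomp: "(\<And>x. sA.nn (B x) \<le> L1 * sA.nn x) \<Longrightarrow> (\<And>x. sA.nn (C x) \<le> L2 * sA.nn x) \<Longrightarrow> L1 \<ge> 0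
  \<Longrightarrow> sA.nn (B (C x)) \<le> (L1 * L2) * sA.nn x"
proof -
  assume b1: "\<And>x. sA.nn (B x) \<le> L1 * sA.nn x" and b2: "\<And>x. sA.nn (C x) \<le> L2 * sA.nn x" and l: "L1 \<ge> 0"
  have "sA.nn (B (C x)) \<le> L1 * sA.nn (C x)" by (rule b1)
  also have "\<dots> \<le> L1 * (L2 * sA.nn x)" by (rule mult_left_mono[OF b2 l])
  finally show ?thesis by (simp add: mult.assoc)
qed

lemma bplus: "(\<And>x. sA.nn (B x) \<le> L1 * sA.nn x) \<Longrightarrow> (\<And>x. sA.nn (C x) \<le> L2 * sA.nn x)
  \<Longrightarrow> sA.nn (B x + C x) \<le> (L1 + L2) * sA.nn x"
proof -
  assume b1: "\<And>x. sA.nn (B x) \<le> L1 * sA.nn x" and b2: "\<And>x. sA.nn (C x) \<le> L2 * sA.nn x"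
  have "sA.nn (B x + C x) \<le> sA.nn (B x) + sA.nn (C x)" by (rule sA.nn_triangle)
  then show ?thesis using b1[of x] b2[of x] by (simp add: distrib_right)
qed

lemma bminus: "(\<And>x. sA.nn (B x) \<le> L1 * sA.nn x) \<Longrightarrow> (\<And>x. sA.nn (C x) \<le> L2 * sA.nn x)
  \<Longrightarrow> sA.nn (B x - C x) \<le> (L1 + L2) * sA.nn x"
proof -
  assume b1: "\<And>x. sA.nn (B x) \<le> L1 * sA.nn x" and b2: "\<And>x. sA.nn (C x) \<le> L2 * sA.nn x"
  have "sA.nn (B x - C x) \<le> sA.nn (B x) + sA.nn (C x)" by (rule sA.nn_diff_le)
  then show ?thesis using b1[of x] b2[of x] by (simp add: distrib_right)
qed

lemma root_lim: assumes c: "c > 0" and mu: "\<mu> > 0"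
  shows "(\<lambda>n. root (Suc n) (c * \<mu> ^ n)) \<longlonglongrightarrow> \<mu>"
proof -
  have eq: "root (Suc n) (c * \<mu> ^ n) = root (Suc n) c * (\<mu> / root (Suc n) \<mu>)" for n
  proof -
    have e: "\<mu> ^ n = \<mu> ^ Suc n / \<mu>" using mu by simp
    have "root (Suc n) (\<mu> ^ n) = root (Suc n) (\<mu> ^ Suc n / \<mu>)" by (subst e) (rule refl)
    also have "\<dots> = root (Suc n) (\<mu> ^ Suc n) / root (Suc n) \<mu>" by (rule real_root_divide)
    finally have "root (Suc n) (\<mu> ^ n) = root (Suc n) (\<mu> ^ Suc n) / root (Suc n) \<mu>" .
    also have "root (Suc n) (\<mu> ^ Suc n) = \<mu>" using mu by (intro real_root_power_cancel) auto
    finally show ?thesis by (simp add: real_root_mult)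
  qed
  have l1: "(\<lambda>n. root (Suc n) c) \<longlonglongrightarrow> 1" using LIMSEQ_Suc[OF LIMSEQ_root_const[OF c]] by simp
  have l2: "(\<lambda>n. root (Suc n) \<mu>) \<longlonglongrightarrow> 1" using LIMSEQ_Suc[OF LIMSEQ_root_const[OF mu]] by simp
  have "(\<lambda>n. root (Suc n) c * (\<mu> / root (Suc n) \<mu>)) \<longlonglongrightarrow> 1 * (\<mu> / 1)"
    by (intro tendsto_intros l1 l2) simp
  then show ?thesis unfolding eq by simp
qed

end

context hilA begin

lemma main_ineq:
  assumes nz: "\<exists>x. A x \<noteq> 0"
    and BP: "P \<in> BA sc ip A" and BQ: "Q \<in> BA sc ip A" and BR: "R \<in> BA sc ip A" and BS: "S \<in> BA sc ip A"
  shows "Aspecrad ip A (\<lambda>x. P (Q x) + R (S x))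
    \<le> (Anumrad ip A (\<lambda>x. Q (P x)) + Anumrad ip A (\<lambda>x. S (R x))) / 2
      + sqrt ((Anumrad ip A (\<lambda>x. Q (P x)) - Anumrad ip A (\<lambda>x. S (R x)))\<^sup>2
              + (Anumrad ip A (\<lambda>x. Q (R x) + S (P x)) + Anumrad ip A (\<lambda>x. Q (R x) - S (P x)))\<^sup>2) / 2"
proof -
  have u: "\<exists>x. sA.nn x = 1" by (rule exists_unit[OF nz])
  from BA_props[OF BP] obtain LP where linP: "lin P" and LP0: "LP \<ge> 0" and LPb: "\<And>x. sA.nn (P x) \<le> LP * sA.nn x" by blast
  from BA_props[OF BQ] obtain LQ where linQ: "lin Q" and LQ0: "LQ \<ge> 0" and LQb: "\<And>x. sA.nn (Q x) \<le> LQ * sA.nn x" by blast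
  from BA_props[OF BR] obtain LR where linR: "lin R" and LR0: "LR \<ge> 0" and LRb: "\<And>x. sA.nn (R x) \<le> LR * sA.nn x" by blast
  from BA_props[OF BS] obtain LS where linS: "lin S" and LS0: "LS \<ge> 0" and LSb: "\<And>x. sA.nn (S x) \<le> LS * sA.nn x" by blast
  define a where "a = Anumrad ip A (\<lambda>x. Q (P x))"
  define d where "d = Anumrad ip A (\<lambda>x. S (R x))"
  define e where "e = Anumrad ip A (\<lambda>x. Q (R x) + S (P x))"
  define f where "f = Anumrad ip A (\<lambda>x. Q (R x) - S (P x))"
  have linQP: "lin (\<lambda>x. Q (P x))" by (rule lin_comp'[OF linQ linP])
  have linSR: "lin (\<lambda>x. S (R x))" by (rule lin_comp'[OF linS linR])
  have linE: "lin (\<lambda>x. Q (R x) + S (P x))" by (rule lin_plus[OF lin_comp'[OF linQ linR] lin_comp'[OF linS linP]])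
  have linF: "lin (\<lambda>x. Q (R x) - S (P x))" by (rule lin_minus_op[OF lin_comp'[OF linQ linR] lin_comp'[OF linS linP]])
  have bQP: "sA.nn (Q (P x)) \<le> (LQ * LP) * sA.nn x" for x by (rule bcomp[OF LQb LPb LQ0])
  have bSR: "sA.nn (S (R x)) \<le> (LS * LR) * sA.nn x" for x by (rule bcomp[OF LSb LRb LS0])
  have bQR: "sA.nn (Q (R x)) \<le> (LQ * LR) * sA.nn x" for x by (rule bcomp[OF LQb LRb LQ0])
  have bSP: "sA.nn (S (P x)) \<le> (LS * LP) * sA.nn x" for x by (rule bcomp[OF LSb LPb LS0])
  have bE: "sA.nn (Q (R x) + S (P x)) \<le> (LQ * LR + LS * LP) * sA.nn x" for x by (rule bplus[OF bQR bSP])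
  have bF: "sA.nn (Q (R x) - S (P x)) \<le> (LQ * LR + LS * LP) * sA.nn x" for x by (rule bminus[OF bQR bSP])
  note nQP = numrad_bound[OF linQP bQP u, folded a_def]
  note nSR = numrad_bound[OF linSR bSR u, folded d_def]
  note nE = numrad_bound[OF linE bE u, folded e_def]
  note nF = numrad_bound[OF linF bF u, folded f_def]
  have a0: "a \<ge> 0" by (rule nQP(1))
  have d0: "d \<ge> 0" by (rule nSR(1))
  have e0: "e \<ge> 0" by (rule nE(1))
  have f0: "f \<ge> 0" by (rule nF(1))
  define lam where "lam = (a + d) / 2 + sqrt ((a - d)\<^sup>2 + (e + f)\<^sup>2) / 2"
  have lam0: "lam \<ge> 0" unfolding lam_def using a0 d0 by simp
  define X where "X p = P (fst p) + R (snd p)" for p :: "'h \<times> 'h"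
  define Y where "Y x = (Q x, S x)" for x
  define M where "M p = Y (X p)" for p
  have Xadd: "X (p + q) = X p + X q" for p q
    unfolding X_def by (simp add: lin_add[OF linP] lin_add[OF linR] algebra_simps)
  have Yadd: "Y (z1 + z2) = Y z1 + Y z2" for z1 z2
    unfolding Y_def by (simp add: lin_add[OF linQ] lin_add[OF linS])
  have Xsc: "X (sc2 c p) = sc c (X p)" for c p
    unfolding X_def sc2_def by (simp add: lin_sc[OF linP] lin_sc[OF linR] sc_add)
  have Ysc: "Y (sc c z) = sc2 c (Y z)" for c z
    unfolding Y_def sc2_def by (simp add: lin_sc[OF linQ] lin_sc[OF linS])
  have linM: "S2.lin M"
    unfolding S2.lin_def M_def Xadd Yadd Xsc Ysc by simp
  have Mb: "cmod (h2 (M p) p) \<le> lam * S2.nn p ^ 2" for p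
  proof -
    define uu where "uu = fst p"
    define vv where "vv = snd p"
    define sn where "sn = sA.nn uu"
    define tn where "tn = sA.nn vv"
    define Xc where "Xc = ip (A (Q (R vv))) uu + ip (A (S (P uu))) vv"
    have hM0: "h2 (M p) p = ip (A (Q (P uu + R vv))) uu + ip (A (S (P uu + R vv))) vv"
      unfolding h2_def M_def X_def Y_def uu_def vv_def by simp
    have hM1: "ip (A (Q (P uu + R vv))) uu = ip (A (Q (P uu))) uu + ip (A (Q (R vv))) uu"
      by (simp add: lin_add[OF linQ] A_add h_add)
    have hM2: "ip (A (S (P uu + R vv))) vv = ip (A (S (P uu))) vv + ip (A (S (R vv))) vv"
      by (simp add: lin_add[OF linS] A_add h_add)
    have hM: "h2 (M p) p = ip (A (Q (P uu))) uu + ip (A (S (R vv))) vv + Xc"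
      unfolding hM0 hM1 hM2 Xc_def by (simp add: algebra_simps)
    have c2: "2 * Xc = (ip (A (Q (R vv) + S (P vv))) uu + ip (A (Q (R uu) + S (P uu))) vv)
        + (ip (A (Q (R vv) - S (P vv))) uu - ip (A (Q (R uu) - S (P uu))) vv)"
    proof -
      have e1: "ip (A (Q (R vv) + S (P vv))) uu = ip (A (Q (R vv))) uu + ip (A (S (P vv))) uu" by (simp add: A_add h_add)
      have e2: "ip (A (Q (R uu) + S (P uu))) vv = ip (A (Q (R uu))) vv + ip (A (S (P uu))) vv" by (simp add: A_add h_add)
      have e3: "ip (A (Q (R vv) - S (P vv))) uu = ip (A (Q (R vv))) uu - ip (A (S (P vv))) uu" by (simp add: lin_diff[OF linA] h_diff_l)
      have e4: "ip (A (Q (R uu) - S (P uu))) vv = ip (A (Q (R uu))) vv - ip (A (S (P uu))) vv" by (simp add: lin_diff[OF linA] h_diff_l)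
      show ?thesis unfolding e1 e2 e3 e4 Xc_def by (simp add: algebra_simps)
    qed
    have cE: "cmod (ip (A (Q (R vv) + S (P vv))) uu + ip (A (Q (R uu) + S (P uu))) vv) \<le> 2 * e * sn * tn"
      unfolding sn_def tn_def by (rule sA.cross_bound[OF linE e0 nE(2)])
    have cF: "cmod (ip (A (Q (R vv) - S (P vv))) uu - ip (A (Q (R uu) - S (P uu))) vv) \<le> 2 * f * sn * tn"
      unfolding sn_def tn_def by (rule sA.cross_bound_minus[OF linF f0 nF(2)])
    have "2 * cmod Xc \<le> 2 * e * sn * tn + 2 * f * sn * tn"
    proof -
      have "2 * cmod Xc = cmod (2 * Xc)" by (simp add: norm_mult)
      also have "\<dots> \<le> cmod (ip (A (Q (R vv) + S (P vv))) uu + ip (A (Q (R uu) + S (P uu))) vv)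
          + cmod (ip (A (Q (R vv) - S (P vv))) uu - ip (A (Q (R uu) - S (P uu))) vv)"
        unfolding c2 by (rule norm_triangle_ineq)
      finally show ?thesis using cE cF by linarith
    qed
    then have cX: "cmod Xc \<le> (e + f) * sn * tn" by (simp add: algebra_simps)
    have ca: "cmod (ip (A (Q (P uu))) uu) \<le> a * sn ^ 2" unfolding sn_def by (rule nQP(2))
    have cd: "cmod (ip (A (S (R vv))) vv) \<le> d * tn ^ 2" unfolding tn_def by (rule nSR(2))
    have "cmod (h2 (M p) p) \<le> cmod (ip (A (Q (P uu))) uu) + cmod (ip (A (S (R vv))) vv) + cmod Xc"
      unfolding hM using norm_triangle_ineq[of "ip (A (Q (P uu))) uu + ip (A (S (R vv))) vv" Xc]
        norm_triangle_ineq[of "ip (A (Q (P uu))) uu" "ip (A (S (R vv))) vv"] by linarith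
    also have "\<dots> \<le> a * sn ^ 2 + d * tn ^ 2 + (e + f) * sn * tn" using ca cd cX by linarith
    also have "\<dots> \<le> lam * (sn ^ 2 + tn ^ 2)" unfolding lam_def
      by (rule eig_bound[OF a0 d0]) (simp add: e0 f0)
    also have "sn ^ 2 + tn ^ 2 = S2.nn p ^ 2" unfolding sn_def tn_def uu_def vv_def S2_nn_sq ..
    finally show ?thesis .
  qed
  define T where "T x = P (Q x) + R (S x)" for x
  have TXY: "T = (\<lambda>x. X (Y x))" unfolding T_def X_def Y_def by simp
  have MYX: "M = (\<lambda>p. Y (X p))" unfolding M_def by simp
  have Xb: "sA.nn (X q) \<le> (LP + LR) * S2.nn q" for q
  proof -
    have "sA.nn (X q) \<le> sA.nn (P (fst q)) + sA.nn (R (snd q))" unfolding X_def by (rule sA.nn_triangle)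
    also have "\<dots> \<le> LP * sA.nn (fst q) + LR * sA.nn (snd q)" using LPb LRb by (rule add_mono)
    also have "\<dots> \<le> LP * S2.nn q + LR * S2.nn q"
      by (rule add_mono[OF mult_left_mono[OF S2_fst LP0] mult_left_mono[OF S2_snd LR0]])
    finally show ?thesis by (simp add: distrib_right)
  qed
  have Yb: "S2.nn (Y x) \<le> (LQ + LS) * sA.nn x" for x
  proof -
    have "S2.nn (Y x) \<le> sA.nn (Q x) + sA.nn (S x)" using S2_le_sum[of "Y x"] unfolding Y_def by simp
    also have "\<dots> \<le> LQ * sA.nn x + LS * sA.nn x" using LQb LSb by (rule add_mono)
    finally show ?thesis by (simp add: distrib_right)
  qed
  define CC where "CC = 2 * (LP + LR) * (LQ + LS)"
  have CC0: "CC \<ge> 0" unfolding CC_def using LP0 LR0 LQ0 LS0 by simp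
  have eps: "Aspecrad ip A T \<le> lam + \<epsilon>" if ep: "\<epsilon> > 0" for \<epsilon>
  proof -
    define \<mu> where "\<mu> = lam + \<epsilon>"
    have mu: "\<mu> > 0" unfolding \<mu>_def using lam0 ep by simp
    have hbmu: "cmod (h2 (M p) p) \<le> \<mu> * S2.nn p ^ 2" for p
    proof -
      have "lam * S2.nn p ^ 2 \<le> \<mu> * S2.nn p ^ 2" unfolding \<mu>_def using ep by (intro mult_right_mono) auto
      then show ?thesis using Mb[of p] by linarith
    qed
    have Mn: "S2.nn ((M ^^ n) q) \<le> 2 * \<mu> ^ n * S2.nn q" for n q
    proof (rule S2.op_bound2[OF S2.lin_funpow[OF linM]])
      show "0 \<le> \<mu> ^ n" using mu by simp
      fix y show "cmod (h2 ((M ^^ n) y) y) \<le> \<mu> ^ n * S2.nn y ^ 2"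
        by (rule S2.power_ineq[OF linM mu hbmu])
    qed
    have Tn: "sA.nn ((T ^^ Suc n) x) \<le> (CC * \<mu> ^ n) * sA.nn x" for n x
    proof -
      have "(T ^^ Suc n) x = X ((M ^^ n) (Y x))" unfolding TXY MYX by (rule funpow_comp_pt)
      then have "sA.nn ((T ^^ Suc n) x) = sA.nn (X ((M ^^ n) (Y x)))" by simp
      also have "\<dots> \<le> (LP + LR) * S2.nn ((M ^^ n) (Y x))" by (rule Xb)
      also have "\<dots> \<le> (LP + LR) * (2 * \<mu> ^ n * S2.nn (Y x))"
        by (rule mult_left_mono[OF Mn]) (simp add: LP0 LR0)
      also have "\<dots> \<le> (LP + LR) * (2 * \<mu> ^ n * ((LQ + LS) * sA.nn x))"
      proof (rule mult_left_mono)
        show "2 * \<mu> ^ n * S2.nn (Y x) \<le> 2 * \<mu> ^ n * ((LQ + LS) * sA.nn x)"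
          by (rule mult_left_mono[OF Yb]) (use mu in simp)
      qed (simp add: LP0 LR0)
      also have "\<dots> = (CC * \<mu> ^ n) * sA.nn x" unfolding CC_def by (simp add: mult_ac)
      finally show ?thesis .
    qed
    define Sr where "Sr = {root n (Aopnorm ip A (T ^^ n)) | n. n \<ge> 1}"
    have sp: "Aspecrad ip A T = Inf Sr" unfolding Aspecrad_def Sr_def ..
    have Sr0: "0 \<le> p" if "p \<in> Sr" for p
    proof -
      from that obtain n where n: "p = root n (Aopnorm ip A (T ^^ n))" "n \<ge> 1" unfolding Sr_def by blast
      define k where "k = n - 1"
      have k: "n = Suc k" using n(2) by (simp add: k_def)
      have "0 \<le> Aopnorm ip A (T ^^ n)" unfolding k by (rule opnorm_bound(1)[OF Tn u])
      then show ?thesis unfolding n(1) by (rule real_root_ge_zero)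
    qed
    have bb: "bdd_below Sr" by (rule bdd_belowI[of _ 0]) (rule Sr0)
    have le: "Inf Sr \<le> root (Suc n) ((CC + 1) * \<mu> ^ n)" for n
    proof -
      have mem: "root (Suc n) (Aopnorm ip A (T ^^ Suc n)) \<in> Sr" unfolding Sr_def
        by (rule CollectI, rule exI[of _ "Suc n"]) simp
      have "Inf Sr \<le> root (Suc n) (Aopnorm ip A (T ^^ Suc n))" by (rule cInf_lower[OF mem bb])
      also have "Aopnorm ip A (T ^^ Suc n) \<le> CC * \<mu> ^ n" by (rule opnorm_bound(2)[OF Tn u])
      then have "root (Suc n) (Aopnorm ip A (T ^^ Suc n)) \<le> root (Suc n) (CC * \<mu> ^ n)" by simp
      also have "CC * \<mu> ^ n \<le> (CC + 1) * \<mu> ^ n" using mu by simp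
      then have "root (Suc n) (CC * \<mu> ^ n) \<le> root (Suc n) ((CC + 1) * \<mu> ^ n)" by simp
      finally show ?thesis .
    qed
    have lim: "(\<lambda>n. root (Suc n) ((CC + 1) * \<mu> ^ n)) \<longlonglongrightarrow> \<mu>"
      by (rule root_lim) (use CC0 mu in simp_all)
    have "Inf Sr \<le> \<mu>" by (rule LIMSEQ_le_const[OF lim]) (intro exI[of _ 0] allI impI le)
    then show ?thesis unfolding sp \<mu>_def .
  qed
  have "Aspecrad ip A T \<le> lam" by (rule field_le_epsilon[OF eps])
  then show ?thesis unfolding T_def lam_def a_def d_def e_def f_def by (simp add: T_def[abs_def])
qed

end

theorem corollary2p10:
  fixes sc :: "complex \<Rightarrow> 'h::ab_group_add \<Rightarrow> 'h"
    and ip :: "'h \<Rightarrow> 'h \<Rightarrow> complex"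
    and A P Q R S :: "'h \<Rightarrow> 'h"
  assumes "complex_hilbert sc ip"
    and "positive_op sc ip A" and "\<exists>x. A x \<noteq> 0"
    and "P \<in> BA sc ip A" and "Q \<in> BA sc ip A" and "R \<in> BA sc ip A" and "S \<in> BA sc ip A"
  shows "Aspecrad ip A (\<lambda>x. P (Q x) + R (S x))
    \<le> (Anumrad ip A (\<lambda>x. Q (P x)) + Anumrad ip A (\<lambda>x. S (R x))) / 2
      + sqrt ((Anumrad ip A (\<lambda>x. Q (P x)) - Anumrad ip A (\<lambda>x. S (R x)))\<^sup>2
              + (Anumrad ip A (\<lambda>x. Q (R x) + S (P x)) + Anumrad ip A (\<lambda>x. Q (R x) - S (P x)))\<^sup>2) / 2"
proof -
  interpret hA: hilA sc ip A
    unfolding hilA_def hilA_axioms_def hil_def using assms(1,2) by blast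
  show ?thesis by (rule hA.main_ineq[OF assms(3-7)])
qed


end
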